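(* Let $(\eta_k)_{k\in\mathbb N}$ be i.i.d. real random variables with $\mathbb{E}\eta_1=0$ and $\sigma_1^2=\mathbb{E}\eta_1^2\in(0,\infty)$, and let $\alpha>-1/2$. Then $$\Big(\frac{(2s)^{1+2\alpha}}{\Gamma(1+2\alpha)\sigma_1^2}\Big)^{1/2}\sum_{k\ge2}\frac{(\log k)^\alpha}{k^{1/2+s}}\eta_k\ \xrightarrow{d}\ \mathcal{N}(0,1),\qquad s\to0+,$$ where $\mathcal{N}(0,1)$ denotes a standard normal random variable.
   Context: For each $s>0$ the series $\sum_{k\ge2}(\log k)^\alpha k^{-1/2-s}\eta_k$ converges a.s. *)

theory Defs
  imports "HOL-Probability.Probability"
begin

text \<open>Convergence in distribution of a family of real probability measures along a filter:
  the library notion weak_conv_m (cdf convergence at continuity points of the limit cdf),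
  generalised from sequences to an arbitrary filter (here: s tending to 0 from the right).\<close>
definition weak_conv_filter :: "('b \<Rightarrow> real measure) \<Rightarrow> real measure \<Rightarrow> 'b filter \<Rightarrow> bool" where
  "weak_conv_filter Ms N F \<equiv>
     \<forall>x. isCont (cdf N) x \<longrightarrow> ((\<lambda>s. cdf (Ms s) x) \<longlongrightarrow> cdf N x) F"

end

theory Submission
  imports Defs
begin

context prob_space begin

lemma sq_int_prod:
  fixes f g :: "'a \<Rightarrow> real"
  assumes [measurable]: "f \<in> borel_measurable M" "g \<in> borel_measurable M"
  and "integrable M (\<lambda>x. (f x)\<^sup>2)" "integrable M (\<lambda>x. (g x)\<^sup>2)"
  shows "integrable M (\<lambda>x. f x * g x)"
proof (rule Bochner_Integration.integrable_bound[where f="\<lambda>x. (f x)\<^sup>2 + (g x)\<^sup>2"])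
  show "integrable M (\<lambda>x. (f x)\<^sup>2 + (g x)\<^sup>2)" using assms by auto
  show "AE x in M. norm (f x * g x) \<le> norm ((f x)\<^sup>2 + (g x)\<^sup>2)"
  proof (rule AE_I2)
    fix x
    have "2 * \<bar>f x\<bar> * \<bar>g x\<bar> \<le> \<bar>f x\<bar>\<^sup>2 + \<bar>g x\<bar>\<^sup>2"
      by (rule sum_squares_bound)
    moreover have "0 \<le> \<bar>f x\<bar> * \<bar>g x\<bar>" by simp
    ultimately have "\<bar>f x\<bar> * \<bar>g x\<bar> \<le> \<bar>f x\<bar>\<^sup>2 + \<bar>g x\<bar>\<^sup>2" by linarith
    then show "norm (f x * g x) \<le> norm ((f x)\<^sup>2 + (g x)\<^sup>2)"
      by (simp add: abs_mult)
  qed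
qed simp

lemma sq_int_sum:
  fixes X :: "nat \<Rightarrow> 'a \<Rightarrow> real"
  assumes [measurable]: "\<And>i. X i \<in> borel_measurable M"
  and "\<And>i. integrable M (\<lambda>x. (X i x)\<^sup>2)"
  shows "integrable M (\<lambda>x. (\<Sum>i\<in>I. X i x)\<^sup>2)"
proof -
  have "(\<lambda>x. (\<Sum>i\<in>I. X i x)\<^sup>2) = (\<lambda>x. \<Sum>i\<in>I. \<Sum>k\<in>I. X i x * X k x)"
    by (simp add: power2_eq_square sum_product)
  moreover have "integrable M (\<lambda>x. \<Sum>i\<in>I. \<Sum>k\<in>I. X i x * X k x)"
    by (intro Bochner_Integration.integrable_sum) (rule sq_int_prod, use assms in auto)
  ultimately show ?thesis by simp
qed

lemma indep_block_mult:
  fixes X :: "nat \<Rightarrow> 'a \<Rightarrow> real" and f g :: "(nat \<Rightarrow> real) \<Rightarrow> real"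
  assumes indep: "indep_vars (\<lambda>_. borel) X UNIV" and AB: "A \<inter> B = {}"
  and f[measurable]: "f \<in> borel_measurable (PiM A (\<lambda>_. borel))"
  and g[measurable]: "g \<in> borel_measurable (PiM B (\<lambda>_. borel))"
  and intf: "integrable M (\<lambda>\<omega>. f (\<lambda>i\<in>A. X i \<omega>))"
  and intg: "integrable M (\<lambda>\<omega>. g (\<lambda>i\<in>B. X i \<omega>))"
  shows "expectation (\<lambda>\<omega>. f (\<lambda>i\<in>A. X i \<omega>) * g (\<lambda>i\<in>B. X i \<omega>)) =
         expectation (\<lambda>\<omega>. f (\<lambda>i\<in>A. X i \<omega>)) * expectation (\<lambda>\<omega>. g (\<lambda>i\<in>B. X i \<omega>))"
proof -
  have "indep_var (PiM A (\<lambda>_. borel)) (\<lambda>\<omega>. \<lambda>i\<in>A. X i \<omega>) (PiM B (\<lambda>_. borel)) (\<lambda>\<omega>. \<lambda>i\<in>B. X i \<omega>)"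
    by (rule indep_var_restrict[OF indep AB]) auto
  then have "indep_var borel (f \<circ> (\<lambda>\<omega>. \<lambda>i\<in>A. X i \<omega>)) borel (g \<circ> (\<lambda>\<omega>. \<lambda>i\<in>B. X i \<omega>))"
    by (rule indep_var_compose) fact+
  then have "expectation (\<lambda>\<omega>. (f \<circ> (\<lambda>\<omega>. \<lambda>i\<in>A. X i \<omega>)) \<omega> * (g \<circ> (\<lambda>\<omega>. \<lambda>i\<in>B. X i \<omega>)) \<omega>)
     = expectation (f \<circ> (\<lambda>\<omega>. \<lambda>i\<in>A. X i \<omega>)) * expectation (g \<circ> (\<lambda>\<omega>. \<lambda>i\<in>B. X i \<omega>))"
    by (rule indep_var_lebesgue_integral) (use intf intg in \<open>simp_all add: comp_def\<close>)
  then show ?thesis by (simp add: comp_def)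
qed

lemma meas_partial:
  assumes "l \<le> j"
  shows "(\<lambda>x. \<Sum>i\<in>{m..<l}. x i) \<in> borel_measurable (PiM {m..<j} (\<lambda>_::nat. borel :: real measure))"
  using assms by (intro borel_measurable_sum measurable_component_singleton) auto


lemma var_sum_indep:
  fixes X :: "nat \<Rightarrow> 'a \<Rightarrow> real"
  assumes indep: "indep_vars (\<lambda>_. borel) X UNIV"
    and int2: "\<And>i. integrable M (\<lambda>\<omega>. (X i \<omega>)\<^sup>2)"
    and mean: "\<And>i. expectation (X i) = 0"
  shows "expectation (\<lambda>\<omega>. (\<Sum>i\<in>{m..<n}. X i \<omega>)\<^sup>2) = (\<Sum>i\<in>{m..<n}. expectation (\<lambda>\<omega>. (X i \<omega>)\<^sup>2))"
proof (induction n)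
  case 0
  then show ?case by simp
next
  case (Suc n)
  have rv[measurable]: "\<And>i. X i \<in> borel_measurable M"
    using indep unfolding indep_vars_def2 by simp
  have intX: "\<And>i. integrable M (X i)"
    by (rule square_integrable_imp_integrable[OF _ int2]) simp
  show ?case
  proof (cases "m \<le> n")
    case False
    then show ?thesis using Suc by simp
  next
    case True
    then have set: "{m..<Suc n} = insert n {m..<n}" by auto
    define T where "T \<omega> = (\<Sum>i\<in>{m..<n}. X i \<omega>)" for \<omega>
    have [measurable]: "T \<in> borel_measurable M" unfolding T_def by measurable
    have T2: "integrable M (\<lambda>\<omega>. (T \<omega>)\<^sup>2)" unfolding T_def by (rule sq_int_sum[OF rv int2])
    have TX: "integrable M (\<lambda>\<omega>. T \<omega> * X n \<omega>)"
      by (rule sq_int_prod[OF _ _ T2 int2]) auto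
    have TXn: "integrable M (\<lambda>\<omega>. 2 * (T \<omega> * X n \<omega>))" using TX by simp
    have cross: "expectation (\<lambda>\<omega>. T \<omega> * X n \<omega>) = 0"
    proof -
      have "expectation (\<lambda>\<omega>. (\<lambda>x. \<Sum>i\<in>{m..<n}. x i) (\<lambda>i\<in>{m..<n}. X i \<omega>) * (\<lambda>x. x n) (\<lambda>i\<in>{n}. X i \<omega>))
        = expectation (\<lambda>\<omega>. (\<lambda>x. \<Sum>i\<in>{m..<n}. x i) (\<lambda>i\<in>{m..<n}. X i \<omega>)) * expectation (\<lambda>\<omega>. (\<lambda>x. x n) (\<lambda>i\<in>{n}. X i \<omega>))"
      proof (rule indep_block_mult[OF indep])
        show "(\<lambda>x::nat\<Rightarrow>real. \<Sum>i\<in>{m..<n}. x i) \<in> borel_measurable (PiM {m..<n} (\<lambda>_. borel))"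
          by (intro borel_measurable_sum measurable_component_singleton) auto
        show "(\<lambda>x::nat\<Rightarrow>real. x n) \<in> borel_measurable (PiM {n} (\<lambda>_. borel))"
          by (rule measurable_component_singleton) simp
        have "(\<lambda>\<omega>. (\<lambda>x. \<Sum>i\<in>{m..<n}. x i) (\<lambda>i\<in>{m..<n}. X i \<omega>)) = T"
          by (auto simp: T_def)
        then show "integrable M (\<lambda>\<omega>. (\<lambda>x. \<Sum>i\<in>{m..<n}. x i) (\<lambda>i\<in>{m..<n}. X i \<omega>))"
          unfolding T_def using intX by simp
        show "integrable M (\<lambda>\<omega>. (\<lambda>x. x n) (\<lambda>i\<in>{n}. X i \<omega>))" using intX by simp
      qed simp
      moreover have "(\<lambda>\<omega>. (\<lambda>x. \<Sum>i\<in>{m..<n}. x i) (\<lambda>i\<in>{m..<n}. X i \<omega>) * (\<lambda>x. x n) (\<lambda>i\<in>{n}. X i \<omega>)) = (\<lambda>\<omega>. T \<omega> * X n \<omega>)"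
        by (auto simp: T_def intro!: sum.cong)
      ultimately show ?thesis using mean by simp
    qed
    have "expectation (\<lambda>\<omega>. (\<Sum>i\<in>{m..<Suc n}. X i \<omega>)\<^sup>2) = expectation (\<lambda>\<omega>. (T \<omega>)\<^sup>2 + 2 * (T \<omega> * X n \<omega>) + (X n \<omega>)\<^sup>2)"
      by (rule arg_cong[where f=expectation]) (simp add: fun_eq_iff set T_def power2_sum algebra_simps)
    also have "\<dots> = expectation (\<lambda>\<omega>. (T \<omega>)\<^sup>2) + expectation (\<lambda>\<omega>. 2 * (T \<omega> * X n \<omega>)) + expectation (\<lambda>\<omega>. (X n \<omega>)\<^sup>2)"
      using T2 TXn int2 by simp
    also have "\<dots> = expectation (\<lambda>\<omega>. (T \<omega>)\<^sup>2) + expectation (\<lambda>\<omega>. (X n \<omega>)\<^sup>2)"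
      using cross by simp
    finally show ?thesis using Suc by (simp add: set T_def)
  qed
qed


lemma kolmogorov_max:
  fixes X :: "nat \<Rightarrow> 'a \<Rightarrow> real"
  assumes indep: "indep_vars (\<lambda>_. borel) X UNIV"
    and int2: "\<And>i. integrable M (\<lambda>\<omega>. (X i \<omega>)\<^sup>2)"
    and mean: "\<And>i. expectation (X i) = 0"
    and mN: "m \<le> N" and eps: "0 < \<epsilon>"
  shows "\<epsilon>\<^sup>2 * prob {\<omega>\<in>space M. \<exists>j\<in>{m<..N}. \<epsilon> \<le> \<bar>\<Sum>i\<in>{m..<j}. X i \<omega>\<bar>}
          \<le> (\<Sum>i\<in>{m..<N}. expectation (\<lambda>\<omega>. (X i \<omega>)\<^sup>2))"
proof -
  have rv[measurable]: "\<And>i. X i \<in> borel_measurable M"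
    using indep unfolding indep_vars_def2 by simp
  have intX: "\<And>i. integrable M (X i)"
    by (rule square_integrable_imp_integrable[OF _ int2]) simp
  define T where "T j \<omega> = (\<Sum>i\<in>{m..<j}. X i \<omega>)" for j \<omega>
  define S where "S j l (x::nat\<Rightarrow>real) = (\<Sum>i\<in>{m..<j}. if i < l then x i else 0)" for j l x
  define Pt where "Pt j x \<longleftrightarrow> \<epsilon> \<le> \<bar>S j j x\<bar> \<and> (\<forall>l\<in>{m<..<j}. \<bar>S j l x\<bar> < \<epsilon>)" for j x
  define A where "A j = {\<omega>\<in>space M. Pt j (\<lambda>i. X i \<omega>)}" for j
  have [measurable]: "T j \<in> borel_measurable M" for j unfolding T_def by measurable
  have ST: "S j l (\<lambda>i. X i \<omega>) = T l \<omega>" if "l \<le> j" for j l \<omega>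
  proof -
    have "S j l (\<lambda>i. X i \<omega>) = (\<Sum>i\<in>{m..<l}. X i \<omega>)"
      unfolding S_def using that by (subst sum.If_cases) (auto intro!: sum.cong)
    then show ?thesis by (simp add: T_def)
  qed
  have PtT: "Pt j (\<lambda>i. X i \<omega>) \<longleftrightarrow> \<epsilon> \<le> \<bar>T j \<omega>\<bar> \<and> (\<forall>l\<in>{m<..<j}. \<bar>T l \<omega>\<bar> < \<epsilon>)" for j \<omega>
    unfolding Pt_def using ST by auto
  have Pt_restr: "Pt j (\<lambda>i\<in>{m..<j}. x i) = Pt j x" for j x
  proof -
    have "S j l (\<lambda>i\<in>{m..<j}. x i) = S j l x" for l
      unfolding S_def by (auto intro!: sum.cong)
    then show ?thesis unfolding Pt_def by simp
  qed
  have measPt: "Measurable.pred (PiM {m..<j} (\<lambda>_. borel)) (Pt j)" for j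
    unfolding Pt_def S_def by measurable
  have [measurable]: "A j \<in> sets M" for j
    unfolding A_def PtT by measurable
  have T2: "integrable M (\<lambda>\<omega>. (T j \<omega>)\<^sup>2)" for j
    unfolding T_def by (rule sq_int_sum[OF rv int2])
  have key: "\<epsilon>\<^sup>2 * prob (A j) \<le> expectation (\<lambda>\<omega>. indicator (A j) \<omega> * (T N \<omega>)\<^sup>2)"
    if j: "j \<in> {m<..N}" for j
  proof -
    define D where "D \<omega> = (\<Sum>i\<in>{j..<N}. X i \<omega>)" for \<omega>
    have [measurable]: "D \<in> borel_measurable M" unfolding D_def by measurable
    have D2: "integrable M (\<lambda>\<omega>. (D \<omega>)\<^sup>2)" unfolding D_def by (rule sq_int_sum[OF rv int2])
    have TND: "T N \<omega> = T j \<omega> + D \<omega>" for \<omega>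
    proof -
      have "{m..<N} = {m..<j} \<union> {j..<N}" using j by auto
      then show ?thesis unfolding T_def D_def by (simp add: sum.union_disjoint)
    qed
    have ED: "expectation D = 0"
      unfolding D_def using intX mean by simp
    define I :: "'a \<Rightarrow> real" where "I \<omega> = indicator (A j) \<omega>" for \<omega>
    have [measurable]: "I \<in> borel_measurable M" unfolding I_def by measurable
    have I01: "I \<omega> = 0 \<or> I \<omega> = 1" for \<omega> unfolding I_def by (simp add: indicator_def)
    have IT2: "integrable M (\<lambda>\<omega>. I \<omega> * (T j \<omega>)\<^sup>2)"
      unfolding I_def using integrable_real_mult_indicator[OF _ T2[of j], of "A j"]
      by (simp add: mult.commute)
    have ID2: "integrable M (\<lambda>\<omega>. I \<omega> * (D \<omega>)\<^sup>2)"
      unfolding I_def using integrable_real_mult_indicator[OF _ D2, of "A j"]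
      by (simp add: mult.commute)
    have IT2': "integrable M (\<lambda>\<omega>. (I \<omega> * T j \<omega>)\<^sup>2)"
    proof -
      have "(\<lambda>\<omega>. (I \<omega> * T j \<omega>)\<^sup>2) = (\<lambda>\<omega>. I \<omega> * (T j \<omega>)\<^sup>2)"
        using I01 by (auto simp: fun_eq_iff power2_eq_square)
      then show ?thesis using IT2 by simp
    qed
    have ITD: "integrable M (\<lambda>\<omega>. 2 * ((I \<omega> * T j \<omega>) * D \<omega>))"
      using sq_int_prod[OF _ _ IT2' D2] by simp
    have cross: "expectation (\<lambda>\<omega>. (I \<omega> * T j \<omega>) * D \<omega>) = 0"
    proof -
      define f where "f x = (if Pt j x then (\<Sum>i\<in>{m..<j}. x i) else 0)" for x :: "nat \<Rightarrow> real"
      define g where "g x = (\<Sum>i\<in>{j..<N}. x i)" for x :: "nat \<Rightarrow> real"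
      have fX: "f (\<lambda>i\<in>{m..<j}. X i \<omega>) = I \<omega> * T j \<omega>" if "\<omega> \<in> space M" for \<omega>
      proof -
        have "(\<Sum>i\<in>{m..<j}. (\<lambda>i\<in>{m..<j}. X i \<omega>) i) = (\<Sum>i\<in>{m..<j}. X i \<omega>)"
          by (auto intro!: sum.cong)
        then show ?thesis
          using that unfolding f_def I_def A_def T_def Pt_restr by (simp add: indicator_def)
      qed
      have gX: "g (\<lambda>i\<in>{j..<N}. X i \<omega>) = D \<omega>" for \<omega>
        unfolding g_def D_def by (auto intro!: sum.cong)
      have fm: "f \<in> borel_measurable (PiM {m..<j} (\<lambda>_. borel))"
        unfolding f_def using measPt[of j]
        by (intro measurable_If borel_measurable_sum measurable_component_singleton) auto
      have gm: "g \<in> borel_measurable (PiM {j..<N} (\<lambda>_. borel))"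
        unfolding g_def by (intro borel_measurable_sum measurable_component_singleton) auto
      have IT: "integrable M (\<lambda>\<omega>. I \<omega> * T j \<omega>)"
        by (rule square_integrable_imp_integrable[OF _ IT2']) simp
      have intf: "integrable M (\<lambda>\<omega>. f (\<lambda>i\<in>{m..<j}. X i \<omega>))"
      proof -
        have "integrable M (\<lambda>\<omega>. f (\<lambda>i\<in>{m..<j}. X i \<omega>)) \<longleftrightarrow> integrable M (\<lambda>\<omega>. I \<omega> * T j \<omega>)"
          by (rule Bochner_Integration.integrable_cong) (auto simp: fX)
        then show ?thesis using IT by simp
      qed
      have intg: "integrable M (\<lambda>\<omega>. g (\<lambda>i\<in>{j..<N}. X i \<omega>))"
        unfolding gX D_def using intX by simp
      have "expectation (\<lambda>\<omega>. f (\<lambda>i\<in>{m..<j}. X i \<omega>) * g (\<lambda>i\<in>{j..<N}. X i \<omega>))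
          = expectation (\<lambda>\<omega>. f (\<lambda>i\<in>{m..<j}. X i \<omega>)) * expectation (\<lambda>\<omega>. g (\<lambda>i\<in>{j..<N}. X i \<omega>))"
        by (rule indep_block_mult[OF indep _ fm gm intf intg]) auto
      also have "expectation (\<lambda>\<omega>. g (\<lambda>i\<in>{j..<N}. X i \<omega>)) = 0"
        unfolding gX using ED by simp
      also have "expectation (\<lambda>\<omega>. f (\<lambda>i\<in>{m..<j}. X i \<omega>) * g (\<lambda>i\<in>{j..<N}. X i \<omega>))
          = expectation (\<lambda>\<omega>. (I \<omega> * T j \<omega>) * D \<omega>)"
        by (rule Bochner_Integration.integral_cong[OF refl]) (simp add: fX gX)
      finally show ?thesis by simp
    qed
    have "\<epsilon>\<^sup>2 * prob (A j) = expectation (\<lambda>\<omega>. \<epsilon>\<^sup>2 * I \<omega>)"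
      unfolding I_def by simp
    also have "\<dots> \<le> expectation (\<lambda>\<omega>. I \<omega> * (T j \<omega>)\<^sup>2)"
    proof (rule integral_mono)
      have "integrable M (indicat_real (A j))"
        by (auto intro!: integrable_real_indicator simp: emeasure_eq_measure)
      then show "integrable M (\<lambda>\<omega>. \<epsilon>\<^sup>2 * I \<omega>)" unfolding I_def by simp
      show "integrable M (\<lambda>\<omega>. I \<omega> * (T j \<omega>)\<^sup>2)" by (rule IT2)
      fix \<omega> assume "\<omega> \<in> space M"
      show "\<epsilon>\<^sup>2 * I \<omega> \<le> I \<omega> * (T j \<omega>)\<^sup>2"
      proof (cases "\<omega> \<in> A j")
        case True
        then have "\<epsilon> \<le> \<bar>T j \<omega>\<bar>" unfolding A_def PtT by simp
        moreover have "0 \<le> \<epsilon>"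
          using eps by simp
        ultimately have "\<epsilon>\<^sup>2 \<le> (T j \<omega>)\<^sup>2"
          by (metis abs_le_square_iff abs_of_nonneg)
        then show ?thesis using True by (simp add: I_def)
      qed (simp add: I_def)
    qed
    also have "\<dots> \<le> expectation (\<lambda>\<omega>. I \<omega> * (T j \<omega>)\<^sup>2) + expectation (\<lambda>\<omega>. 2 * ((I \<omega> * T j \<omega>) * D \<omega>))
                    + expectation (\<lambda>\<omega>. I \<omega> * (D \<omega>)\<^sup>2)"
    proof -
      have "0 \<le> expectation (\<lambda>\<omega>. I \<omega> * (D \<omega>)\<^sup>2)"
        by (rule integral_nonneg_AE) (simp add: I_def)
      then show ?thesis using cross by simp
    qed
    also have "\<dots> = expectation (\<lambda>\<omega>. I \<omega> * (T j \<omega>)\<^sup>2 + 2 * ((I \<omega> * T j \<omega>) * D \<omega>) + I \<omega> * (D \<omega>)\<^sup>2)"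
      using IT2 ITD ID2 by simp
    also have "\<dots> = expectation (\<lambda>\<omega>. I \<omega> * (T N \<omega>)\<^sup>2)"
      by (rule arg_cong[where f=expectation]) (simp add: fun_eq_iff TND power2_sum algebra_simps)
    finally show ?thesis unfolding I_def .
  qed
  have disj: "disjoint_family_on A {m<..N}"
  proof (unfold disjoint_family_on_def, intro ballI impI)
    fix j k assume jk: "j \<in> {m<..N}" "k \<in> {m<..N}" "j \<noteq> k"
    show "A j \<inter> A k = {}"
    proof (rule ccontr)
      assume "A j \<inter> A k \<noteq> {}"
      then obtain \<omega> where "\<omega> \<in> A j" "\<omega> \<in> A k" by blast
      then have a: "\<epsilon> \<le> \<bar>T j \<omega>\<bar>" "\<forall>l\<in>{m<..<j}. \<bar>T l \<omega>\<bar> < \<epsilon>"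
        and b: "\<epsilon> \<le> \<bar>T k \<omega>\<bar>" "\<forall>l\<in>{m<..<k}. \<bar>T l \<omega>\<bar> < \<epsilon>"
        unfolding A_def PtT by auto
      show False
      proof (cases "j < k")
        case True then show False using a b jk by force
      next
        case False then have "k < j" using jk by simp
        then show False using a b jk by force
      qed
    qed
  qed
  have Uni: "{\<omega>\<in>space M. \<exists>j\<in>{m<..N}. \<epsilon> \<le> \<bar>\<Sum>i\<in>{m..<j}. X i \<omega>\<bar>} = (\<Union>j\<in>{m<..N}. A j)"
  proof (intro equalityI subsetI)
    fix \<omega> assume "\<omega> \<in> {\<omega>\<in>space M. \<exists>j\<in>{m<..N}. \<epsilon> \<le> \<bar>\<Sum>i\<in>{m..<j}. X i \<omega>\<bar>}"
    then have sp: "\<omega> \<in> space M" and ex: "\<exists>j. j \<in> {m<..N} \<and> \<epsilon> \<le> \<bar>T j \<omega>\<bar>"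
      unfolding T_def by auto
    then obtain j where j: "j \<in> {m<..N} \<and> \<epsilon> \<le> \<bar>T j \<omega>\<bar>"
      and min: "\<And>l. l < j \<Longrightarrow> \<not> (l \<in> {m<..N} \<and> \<epsilon> \<le> \<bar>T l \<omega>\<bar>)"
      using exists_least_iff[of "\<lambda>j. j \<in> {m<..N} \<and> \<epsilon> \<le> \<bar>T j \<omega>\<bar>"] by blast
    have "\<forall>l\<in>{m<..<j}. \<bar>T l \<omega>\<bar> < \<epsilon>"
    proof
      fix l assume "l \<in> {m<..<j}"
      then show "\<bar>T l \<omega>\<bar> < \<epsilon>" using min[of l] j by force
    qed
    then have "\<omega> \<in> A j" using sp j unfolding A_def PtT by auto
    then show "\<omega> \<in> (\<Union>j\<in>{m<..N}. A j)" using j by auto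
  next
    fix \<omega> assume "\<omega> \<in> (\<Union>j\<in>{m<..N}. A j)"
    then show "\<omega> \<in> {\<omega>\<in>space M. \<exists>j\<in>{m<..N}. \<epsilon> \<le> \<bar>\<Sum>i\<in>{m..<j}. X i \<omega>\<bar>}"
      unfolding A_def PtT T_def by auto
  qed
  have "\<epsilon>\<^sup>2 * prob {\<omega>\<in>space M. \<exists>j\<in>{m<..N}. \<epsilon> \<le> \<bar>\<Sum>i\<in>{m..<j}. X i \<omega>\<bar>}
      = (\<Sum>j\<in>{m<..N}. \<epsilon>\<^sup>2 * prob (A j))"
    unfolding Uni by (subst finite_measure_finite_Union) (auto simp: disj sum_distrib_left)
  also have "\<dots> \<le> (\<Sum>j\<in>{m<..N}. expectation (\<lambda>\<omega>. indicator (A j) \<omega> * (T N \<omega>)\<^sup>2))"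
    by (rule sum_mono) (rule key)
  also have "\<dots> = expectation (\<lambda>\<omega>. (\<Sum>j\<in>{m<..N}. indicator (A j) \<omega>) * (T N \<omega>)\<^sup>2)"
  proof -
    have "\<And>j. integrable M (\<lambda>\<omega>. indicator (A j) \<omega> * (T N \<omega>)\<^sup>2)"
      using integrable_real_mult_indicator[OF _ T2[of N]] by (simp add: mult.commute)
    then have "expectation (\<lambda>\<omega>. \<Sum>j\<in>{m<..N}. indicator (A j) \<omega> * (T N \<omega>)\<^sup>2)
       = (\<Sum>j\<in>{m<..N}. expectation (\<lambda>\<omega>. indicator (A j) \<omega> * (T N \<omega>)\<^sup>2))"
      by (intro Bochner_Integration.integral_sum) auto
    moreover have "(\<lambda>\<omega>. (\<Sum>j\<in>{m<..N}. indicator (A j) \<omega>) * (T N \<omega>)\<^sup>2)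
       = (\<lambda>\<omega>. \<Sum>j\<in>{m<..N}. indicator (A j) \<omega> * (T N \<omega>)\<^sup>2)"
      by (rule ext) (rule sum_distrib_right)
    ultimately show ?thesis by simp
  qed
  also have "\<dots> \<le> expectation (\<lambda>\<omega>. (T N \<omega>)\<^sup>2)"
  proof (rule integral_mono)
    have "(\<lambda>\<omega>. (\<Sum>j\<in>{m<..N}. indicator (A j) \<omega>) * (T N \<omega>)\<^sup>2) = (\<lambda>\<omega>. indicator (\<Union>j\<in>{m<..N}. A j) \<omega> * (T N \<omega>)\<^sup>2)"
      by (subst indicator_UN_disjoint[OF _ disj]) auto
    then show "integrable M (\<lambda>\<omega>. (\<Sum>j\<in>{m<..N}. indicator (A j) \<omega>) * (T N \<omega>)\<^sup>2)"
      using integrable_real_mult_indicator[OF _ T2[of N], of "\<Union>j\<in>{m<..N}. A j"]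
      by (simp add: mult.commute)
    show "integrable M (\<lambda>\<omega>. (T N \<omega>)\<^sup>2)" by (rule T2)
    fix \<omega>
    have "(\<Sum>j\<in>{m<..N}. indicator (A j) \<omega>) = (indicator (\<Union>j\<in>{m<..N}. A j) \<omega> :: real)"
      by (subst indicator_UN_disjoint[OF _ disj]) auto
    then show "(\<Sum>j\<in>{m<..N}. indicator (A j) \<omega>) * (T N \<omega>)\<^sup>2 \<le> (T N \<omega>)\<^sup>2"
      by (simp add: indicator_def)
  qed
  also have "\<dots> = (\<Sum>i\<in>{m..<N}. expectation (\<lambda>\<omega>. (X i \<omega>)\<^sup>2))"
    unfolding T_def by (rule var_sum_indep[OF indep int2 mean])
  finally show ?thesis .
qed


lemma kolmogorov_tail:
  fixes X :: "nat \<Rightarrow> 'a \<Rightarrow> real"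
  assumes indep: "indep_vars (\<lambda>_. borel) X UNIV"
    and int2: "\<And>i. integrable M (\<lambda>\<omega>. (X i \<omega>)\<^sup>2)"
    and mean: "\<And>i. expectation (X i) = 0"
    and summ: "summable (\<lambda>i. expectation (\<lambda>\<omega>. (X i \<omega>)\<^sup>2))"
    and eps: "0 < \<epsilon>"
  shows "prob {\<omega>\<in>space M. \<exists>j>m. \<epsilon> \<le> \<bar>\<Sum>i\<in>{m..<j}. X i \<omega>\<bar>}
          \<le> (\<Sum>i. expectation (\<lambda>\<omega>. (X (i + m) \<omega>)\<^sup>2)) / \<epsilon>\<^sup>2"
proof -
  have rv[measurable]: "\<And>i. X i \<in> borel_measurable M"
    using indep unfolding indep_vars_def2 by simp
  define v where "v i = expectation (\<lambda>\<omega>. (X i \<omega>)\<^sup>2)" for i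
  have v0: "0 \<le> v i" for i unfolding v_def by (rule integral_nonneg_AE) simp
  have summ': "summable (\<lambda>i. v (i + m))"
    using summ unfolding v_def by (subst summable_iff_shift) simp
  define E where "E N = {\<omega>\<in>space M. \<exists>j\<in>{m<..N}. \<epsilon> \<le> \<bar>\<Sum>i\<in>{m..<j}. X i \<omega>\<bar>}" for N
  have Em: "E N \<in> sets M" for N unfolding E_def by measurable
  have inc: "incseq E" unfolding incseq_def E_def by force
  have U: "(\<Union>N. E N) = {\<omega>\<in>space M. \<exists>j>m. \<epsilon> \<le> \<bar>\<Sum>i\<in>{m..<j}. X i \<omega>\<bar>}"
    unfolding E_def by (auto) (metis greaterThanAtMost_iff order_refl)
  have bound: "prob (E N) \<le> (\<Sum>i. v (i + m)) / \<epsilon>\<^sup>2" for N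
  proof (cases "m \<le> N")
    case True
    have "\<epsilon>\<^sup>2 * prob (E N) \<le> (\<Sum>i\<in>{m..<N}. v i)"
      unfolding E_def v_def by (rule kolmogorov_max[OF indep int2 mean True eps])
    also have "(\<Sum>i\<in>{m..<N}. v i) = (\<Sum>i\<in>{0..<N-m}. v (i + m))"
      by (subst sum.atLeastLessThan_shift_0) (simp add: comp_def add.commute)
    also have "\<dots> \<le> (\<Sum>i. v (i + m))"
      by (rule sum_le_suminf[OF summ']) (auto simp: v0)
    finally show ?thesis using eps by (simp add: pos_le_divide_eq mult.commute)
  next
    case False
    then have "E N = {}" unfolding E_def by auto
    moreover have "0 \<le> (\<Sum>i. v (i + m))" by (rule suminf_nonneg[OF summ']) (simp add: v0)
    ultimately show ?thesis by simp
  qed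
  have "(\<lambda>N. prob (E N)) \<longlonglongrightarrow> prob (\<Union>N. E N)"
    by (rule finite_Lim_measure_incseq) (use Em inc in auto)
  then have "prob (\<Union>N. E N) \<le> (\<Sum>i. v (i + m)) / \<epsilon>\<^sup>2"
    by (rule LIMSEQ_le_const2) (use bound in auto)
  then show ?thesis unfolding U v_def .
qed

lemma kolmogorov_as:
  fixes X :: "nat \<Rightarrow> 'a \<Rightarrow> real"
  assumes indep: "indep_vars (\<lambda>_. borel) X UNIV"
    and int2: "\<And>i. integrable M (\<lambda>\<omega>. (X i \<omega>)\<^sup>2)"
    and mean: "\<And>i. expectation (X i) = 0"
    and summ: "summable (\<lambda>i. expectation (\<lambda>\<omega>. (X i \<omega>)\<^sup>2))"
  shows "AE \<omega> in M. summable (\<lambda>i. X i \<omega>)"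
proof -
  have rv[measurable]: "\<And>i. X i \<in> borel_measurable M"
    using indep unfolding indep_vars_def2 by simp
  define v where "v i = expectation (\<lambda>\<omega>. (X i \<omega>)\<^sup>2)" for i
  have AEr: "AE \<omega> in M. \<exists>m. \<forall>j>m. \<bar>\<Sum>i\<in>{m..<j}. X i \<omega>\<bar> < 1 / Suc r" for r :: nat
  proof -
    define \<epsilon> :: real where "\<epsilon> = 1 / Suc r"
    have eps: "0 < \<epsilon>" unfolding \<epsilon>_def by simp
    define B where "B = {\<omega>\<in>space M. \<forall>m. \<exists>j>m. \<epsilon> \<le> \<bar>\<Sum>i\<in>{m..<j}. X i \<omega>\<bar>}"
    have Bm: "B \<in> sets M" unfolding B_def by measurable
    have Ble: "prob B \<le> d" if d: "0 < d" for d
    proof -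
      obtain m where m: "norm (\<Sum>i. v (i + m)) < d * \<epsilon>\<^sup>2"
        using suminf_exist_split[of "d * \<epsilon>\<^sup>2" v] summ d eps unfolding v_def by auto
      have "prob B \<le> prob {\<omega>\<in>space M. \<exists>j>m. \<epsilon> \<le> \<bar>\<Sum>i\<in>{m..<j}. X i \<omega>\<bar>}"
        by (rule finite_measure_mono) (auto simp: B_def)
      also have "\<dots> \<le> (\<Sum>i. v (i + m)) / \<epsilon>\<^sup>2"
        unfolding v_def by (rule kolmogorov_tail[OF indep int2 mean summ eps])
      also have "\<dots> \<le> d" using m eps by (simp add: divide_le_eq)
      finally show ?thesis .
    qed
    have "prob B \<le> 0"
      by (rule field_le_epsilon) (use Ble in auto)
    then have "prob B = 0" using measure_nonneg[of M B] by linarith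
    then have "B \<in> null_sets M" using Bm by (simp add: emeasure_eq_measure null_sets_def)
    then show ?thesis
      by (rule AE_I') (auto simp: B_def \<epsilon>_def not_less)
  qed
  then have "AE \<omega> in M. \<forall>r::nat. \<exists>m. \<forall>j>m. \<bar>\<Sum>i\<in>{m..<j}. X i \<omega>\<bar> < 1 / Suc r"
    by (subst AE_all_countable) simp
  then show ?thesis
  proof (rule AE_mp, intro AE_I2 impI)
    fix \<omega> assume H: "\<forall>r::nat. \<exists>m. \<forall>j>m. \<bar>\<Sum>i\<in>{m..<j}. X i \<omega>\<bar> < 1 / Suc r"
    show "summable (\<lambda>i. X i \<omega>)"
      unfolding summable_Cauchy
    proof (intro allI impI)
      fix e :: real assume e: "0 < e"
      obtain r :: nat where r: "2 / e < r" using reals_Archimedean2 by blast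
      have "2 < e * r" using r e by (simp add: divide_less_eq mult.commute)
      then have "2 < e * Suc r" using e by (simp add: algebra_simps)
      then have r': "2 / Suc r < e" by (simp add: divide_less_eq mult.commute)
      obtain m where m: "\<forall>j>m. \<bar>\<Sum>i\<in>{m..<j}. X i \<omega>\<bar> < 1 / Suc r" using H by blast
      show "\<exists>N. \<forall>p\<ge>N. \<forall>n. norm (\<Sum>i\<in>{p..<n}. X i \<omega>) < e"
      proof (intro exI allI impI)
        fix p n assume p: "Suc m \<le> p"
        show "norm (\<Sum>i\<in>{p..<n}. X i \<omega>) < e"
        proof (cases "p \<le> n")
          case False then show ?thesis using e by simp
        next
          case True
          have "(\<Sum>i\<in>{m..<n}. X i \<omega>) = (\<Sum>i\<in>{m..<p}. X i \<omega>) + (\<Sum>i\<in>{p..<n}. X i \<omega>)"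
            using True p by (subst sum.atLeastLessThan_concat) auto
          moreover have "\<bar>\<Sum>i\<in>{m..<n}. X i \<omega>\<bar> < 1 / Suc r" "\<bar>\<Sum>i\<in>{m..<p}. X i \<omega>\<bar> < 1 / Suc r"
            using m p True by auto
          ultimately have "\<bar>\<Sum>i\<in>{p..<n}. X i \<omega>\<bar> < 2 / Suc r" by linarith
          then show ?thesis using r' by simp
        qed
      qed
    qed
  qed
qed

end

lemma exp_quad_bound:
  fixes y :: real assumes y: "0 \<le> y"
  shows "\<bar>exp (-y) - (1 - y)\<bar> \<le> y\<^sup>2 / 2"
proof -
  have lo: "1 - y \<le> exp (-y)" using exp_ge_add_one_self[of "-y"] by simp
  have q: "1 + y + y\<^sup>2 / 2 \<le> exp y" by (rule exp_lower_Taylor_quadratic) (rule y)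
  have p1: "0 < 1 + y + y\<^sup>2 / 2" using y by (simp add: add_pos_nonneg)
  have p2: "0 < 1 - y + y\<^sup>2 / 2"
  proof -
    have "1 - y + y\<^sup>2 / 2 = ((y - 1)\<^sup>2 + 1) / 2" by (simp add: power2_eq_square algebra_simps)
    moreover have "0 < ((y - 1)\<^sup>2 + 1) / 2" by (simp add: add_nonneg_pos)
    ultimately show ?thesis by simp
  qed
  have "exp (-y) = 1 / exp y" by (simp add: exp_minus inverse_eq_divide)
  also have "\<dots> \<le> 1 / (1 + y + y\<^sup>2 / 2)"
    by (rule divide_left_mono[OF q]) (use p1 in auto)
  also have "\<dots> \<le> 1 - y + y\<^sup>2 / 2"
  proof -
    have "(1 - y + y\<^sup>2 / 2) * (1 + y + y\<^sup>2 / 2) = 1 + y ^ 4 / 4"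
      by (simp add: power2_eq_square power4_eq_xxxx algebra_simps)
    then have "1 \<le> (1 - y + y\<^sup>2 / 2) * (1 + y + y\<^sup>2 / 2)" by simp
    then show ?thesis using p1 by (simp add: divide_le_eq)
  qed
  finally show ?thesis using lo by (simp add: abs_le_iff)
qed

lemma norm_prod_diff_le:
  fixes z y :: "nat \<Rightarrow> complex"
  assumes "\<And>k. k \<in> A \<Longrightarrow> norm (z k) \<le> 1" "\<And>k. k \<in> A \<Longrightarrow> norm (y k) \<le> 1"
  shows "norm ((\<Prod>k\<in>A. z k) - (\<Prod>k\<in>A. y k)) \<le> (\<Sum>k\<in>A. norm (z k - y k))"
  using assms
proof (induction A rule: infinite_finite_induct)
  case (insert a F)
  have py: "norm (\<Prod>k\<in>F. y k) \<le> 1"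
    using insert.prems by (simp add: prod_norm[symmetric] prod_le_1)
  have "(\<Prod>k\<in>insert a F. z k) - (\<Prod>k\<in>insert a F. y k)
      = z a * ((\<Prod>k\<in>F. z k) - (\<Prod>k\<in>F. y k)) + (z a - y a) * (\<Prod>k\<in>F. y k)"
    using insert.hyps by (simp add: algebra_simps)
  also have "norm \<dots> \<le> norm (z a) * norm ((\<Prod>k\<in>F. z k) - (\<Prod>k\<in>F. y k)) + norm (z a - y a) * norm (\<Prod>k\<in>F. y k)"
    by (metis norm_mult norm_triangle_ineq)
  also have "\<dots> \<le> 1 * (\<Sum>k\<in>F. norm (z k - y k)) + norm (z a - y a) * 1"
    using insert by (intro add_mono mult_mono py) auto
  finally show ?case using insert.hyps by simp
qed simp_all

context prob_space begin

lemma char_scale: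
  fixes Y :: "'a \<Rightarrow> real"
  assumes [measurable]: "Y \<in> borel_measurable M"
  shows "char (distr M borel (\<lambda>\<omega>. c * Y \<omega>)) t = char (distr M borel Y) (t * c)"
  unfolding char_def by (simp add: integral_distr mult.assoc)

lemma char_weighted_series:
  fixes X :: "nat \<Rightarrow> 'a \<Rightarrow> real" and w :: "nat \<Rightarrow> real" and \<mu> :: "real measure"
  assumes indep: "indep_vars (\<lambda>_. borel) X UNIV"
    and distrX: "\<And>k. distr M borel (X k) = \<mu>"
    and i1: "integrable \<mu> (\<lambda>x. x)" and i2: "integrable \<mu> (\<lambda>x. x\<^sup>2)"
    and m0: "(LINT x|\<mu>. x) = 0" and s2: "(LINT x|\<mu>. x\<^sup>2) = \<sigma>2"
    and wsum: "summable (\<lambda>k. (w k)\<^sup>2)"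
    and del: "\<And>k. \<bar>t * w k\<bar> \<le> \<delta>"
  shows "cmod (char (distr M borel (\<lambda>\<omega>. \<Sum>k. w k * X k \<omega>)) t
               - complex_of_real (exp (- (t\<^sup>2 * \<sigma>2 * (\<Sum>k. (w k)\<^sup>2)) / 2)))
      \<le> t\<^sup>2 * (\<Sum>k. (w k)\<^sup>2) * ((LINT x|\<mu>. min (6 * x\<^sup>2) (\<delta> * \<bar>x\<bar> ^ 3)) / 6 + \<delta>\<^sup>2 * \<sigma>2\<^sup>2 / 8)"
proof -
  have rv[measurable]: "\<And>i. X i \<in> borel_measurable M"
    using indep unfolding indep_vars_def2 by simp
  interpret \<mu>: real_distribution \<mu>
    by (subst distrX [symmetric, of 0], rule real_distribution_distr, simp)
  have int2: "integrable M (\<lambda>\<omega>. (X k \<omega>)\<^sup>2)" for k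
    using i2 unfolding distrX[of k, symmetric] by (subst (asm) integrable_distr_eq) auto
  have mean: "expectation (X k) = 0" for k
    using m0 unfolding distrX[of k, symmetric] by (subst (asm) integral_distr) auto
  have var: "expectation (\<lambda>\<omega>. (X k \<omega>)\<^sup>2) = \<sigma>2" for k
    using s2 unfolding distrX[of k, symmetric] by (subst (asm) integral_distr) auto
  have s2pos: "0 \<le> \<sigma>2" using var[of 0] integral_nonneg_AE[of "\<lambda>\<omega>. (X 0 \<omega>)\<^sup>2" M] by simp
  have d0: "0 \<le> \<delta>" using del[of 0] by linarith
  define Y where "Y k \<omega> = w k * X k \<omega>" for k \<omega>
  have [measurable]: "Y k \<in> borel_measurable M" for k unfolding Y_def by measurable
  have indepY: "indep_vars (\<lambda>_. borel) Y UNIV"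
    unfolding Y_def by (rule indep_vars_compose2[OF indep, where Y="\<lambda>k x. w k * x"]) simp
  have intY2: "integrable M (\<lambda>\<omega>. (Y k \<omega>)\<^sup>2)" for k
    unfolding Y_def using int2[of k] by (simp add: power_mult_distrib)
  have meanY: "expectation (Y k) = 0" for k
    unfolding Y_def using mean[of k] by simp
  have varY: "expectation (\<lambda>\<omega>. (Y k \<omega>)\<^sup>2) = (w k)\<^sup>2 * \<sigma>2" for k
    unfolding Y_def using var[of k] by (simp add: power_mult_distrib)
  have AEs: "AE \<omega> in M. summable (\<lambda>k. Y k \<omega>)"
    by (rule kolmogorov_as[OF indepY intY2 meanY]) (use wsum in \<open>simp add: varY summable_mult2\<close>)
  define S where "S N \<omega> = (\<Sum>k<N. Y k \<omega>)" for N \<omega>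
  have [measurable]: "S N \<in> borel_measurable M" for N unfolding S_def by measurable
  define \<phi> where "\<phi> u = char \<mu> u" for u
  have charY: "char (distr M borel (Y k)) t = \<phi> (t * w k)" for k
  proof -
    have "char (distr M borel (Y k)) t = (CLINT \<omega>|M. iexp ((t * w k) * X k \<omega>))"
      unfolding char_def Y_def by (simp add: integral_distr mult.assoc)
    also have "\<dots> = (CLINT x|distr M borel (X k). iexp ((t * w k) * x))"
      by (simp add: integral_distr)
    finally show ?thesis unfolding \<phi>_def char_def distrX .
  qed
  have charS: "char (distr M borel (S N)) t = (\<Prod>k<N. \<phi> (t * w k))" for N
  proof -
    have "char (distr M borel (\<lambda>\<omega>. \<Sum>k\<in>{..<N}. Y k \<omega>)) t = (\<Prod>k\<in>{..<N}. char (distr M borel (Y k)) t)"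
      by (rule char_distr_sum) (rule indep_vars_subset[OF indepY], simp)
    then show ?thesis unfolding S_def charY by simp
  qed
  define E where "E = (LINT x|\<mu>. min (6 * x\<^sup>2) (\<delta> * \<bar>x\<bar> ^ 3))"
  define C where "C = E / 6 + \<delta>\<^sup>2 * \<sigma>2\<^sup>2 / 8"
  have bk: "cmod (\<phi> (t * w k) - complex_of_real (exp (- ((t * w k)\<^sup>2 * \<sigma>2 / 2)))) \<le> (t * w k)\<^sup>2 * C" for k
  proof -
    define u where "u = t * w k"
    have u: "\<bar>u\<bar> \<le> \<delta>" unfolding u_def by (rule del)
    have "\<mu>.variance (\<lambda>x. x) = \<sigma>2" using m0 s2 by simp
    then have a1: "cmod (\<phi> u - (1 - u\<^sup>2 * \<sigma>2 / 2)) \<le> (u\<^sup>2 / 6) * (LINT x|\<mu>. min (6 * x\<^sup>2) (\<bar>u\<bar> * \<bar>x\<bar> ^ 3))"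
      unfolding \<phi>_def by (intro \<mu>.char_approx3 i1 i2 m0)
    have "(LINT x|\<mu>. min (6 * x\<^sup>2) (\<bar>u\<bar> * \<bar>x\<bar> ^ 3)) \<le> E"
      unfolding E_def
    proof (rule integral_mono)
      show "integrable \<mu> (\<lambda>x. min (6 * x\<^sup>2) (\<bar>u\<bar> * \<bar>x\<bar> ^ 3))"
        by (rule Bochner_Integration.integrable_bound[where f="\<lambda>x. 6 * x\<^sup>2"]) (use i2 in auto)
      show "integrable \<mu> (\<lambda>x. min (6 * x\<^sup>2) (\<delta> * \<bar>x\<bar> ^ 3))"
        by (rule Bochner_Integration.integrable_bound[where f="\<lambda>x. 6 * x\<^sup>2"]) (use i2 d0 in auto)
      fix x :: real
      have "\<bar>u\<bar> * \<bar>x\<bar> ^ 3 \<le> \<delta> * \<bar>x\<bar> ^ 3" using u by (intro mult_right_mono) auto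
      then show "min (6 * x\<^sup>2) (\<bar>u\<bar> * \<bar>x\<bar> ^ 3) \<le> min (6 * x\<^sup>2) (\<delta> * \<bar>x\<bar> ^ 3)" by simp
    qed
    then have "(u\<^sup>2 / 6) * (LINT x|\<mu>. min (6 * x\<^sup>2) (\<bar>u\<bar> * \<bar>x\<bar> ^ 3)) \<le> (u\<^sup>2 / 6) * E"
      by (rule mult_left_mono) simp
    then have a2: "cmod (\<phi> u - (1 - u\<^sup>2 * \<sigma>2 / 2)) \<le> u\<^sup>2 * (E / 6)"
      using a1 by simp
    have "\<bar>exp (- (u\<^sup>2 * \<sigma>2 / 2)) - (1 - u\<^sup>2 * \<sigma>2 / 2)\<bar> \<le> (u\<^sup>2 * \<sigma>2 / 2)\<^sup>2 / 2"
      by (rule exp_quad_bound) (use s2pos in simp)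
    also have "(u\<^sup>2 * \<sigma>2 / 2)\<^sup>2 / 2 = u\<^sup>2 * (u\<^sup>2 * \<sigma>2\<^sup>2 / 8)" by (simp add: power2_eq_square)
    also have "\<dots> \<le> u\<^sup>2 * (\<delta>\<^sup>2 * \<sigma>2\<^sup>2 / 8)"
    proof -
      have "u\<^sup>2 \<le> \<delta>\<^sup>2" using u by (metis abs_le_square_iff abs_of_nonneg d0)
      then show ?thesis by (intro mult_left_mono) (auto intro: mult_right_mono)
    qed
    finally have a3: "cmod (complex_of_real (1 - u\<^sup>2 * \<sigma>2 / 2) - complex_of_real (exp (- (u\<^sup>2 * \<sigma>2 / 2))))
        \<le> u\<^sup>2 * (\<delta>\<^sup>2 * \<sigma>2\<^sup>2 / 8)"
      by (simp only: norm_of_real of_real_diff[symmetric] abs_minus_commute)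
    have eqA: "complex_of_real (1 - u\<^sup>2 * \<sigma>2 / 2) = 1 - (complex_of_real u)\<^sup>2 * complex_of_real \<sigma>2 / 2"
      by simp
    have "cmod (\<phi> u - complex_of_real (exp (- (u\<^sup>2 * \<sigma>2 / 2))))
        = cmod ((\<phi> u - complex_of_real (1 - u\<^sup>2 * \<sigma>2 / 2)) + (complex_of_real (1 - u\<^sup>2 * \<sigma>2 / 2) - complex_of_real (exp (- (u\<^sup>2 * \<sigma>2 / 2)))))"
      by simp
    also have "\<dots> \<le> cmod (\<phi> u - complex_of_real (1 - u\<^sup>2 * \<sigma>2 / 2)) + cmod (complex_of_real (1 - u\<^sup>2 * \<sigma>2 / 2) - complex_of_real (exp (- (u\<^sup>2 * \<sigma>2 / 2))))"
      by (rule norm_triangle_ineq)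
    also have "\<dots> \<le> u\<^sup>2 * (E / 6) + u\<^sup>2 * (\<delta>\<^sup>2 * \<sigma>2\<^sup>2 / 8)"
      using a2 a3 unfolding eqA by (rule add_mono)
    finally show ?thesis unfolding u_def C_def by (simp add: algebra_simps)
  qed
  have E0: "0 \<le> E" unfolding E_def by (rule integral_nonneg_AE) (use d0 in auto)
  have C0: "0 \<le> C" unfolding C_def using E0 by simp
  define W where "W = (\<Sum>k. (w k)\<^sup>2)"
  have PN: "cmod (char (distr M borel (S N)) t - complex_of_real (exp (- (t\<^sup>2 * \<sigma>2 * (\<Sum>k<N. (w k)\<^sup>2)) / 2)))
      \<le> t\<^sup>2 * W * C" for N
  proof -
    have ex: "complex_of_real (exp (- (t\<^sup>2 * \<sigma>2 * (\<Sum>k<N. (w k)\<^sup>2)) / 2))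
        = (\<Prod>k<N. complex_of_real (exp (- ((t * w k)\<^sup>2 * \<sigma>2 / 2))))"
    proof -
      have "- (t\<^sup>2 * \<sigma>2 * (\<Sum>k<N. (w k)\<^sup>2)) / 2 = (\<Sum>k<N. - ((t * w k)\<^sup>2 * \<sigma>2 / 2))"
        by (simp add: sum_distrib_left sum_divide_distrib power_mult_distrib algebra_simps flip: sum_negf)
      then show ?thesis by (simp add: exp_sum)
    qed
    have "cmod (char (distr M borel (S N)) t - complex_of_real (exp (- (t\<^sup>2 * \<sigma>2 * (\<Sum>k<N. (w k)\<^sup>2)) / 2)))
        \<le> (\<Sum>k<N. cmod (\<phi> (t * w k) - complex_of_real (exp (- ((t * w k)\<^sup>2 * \<sigma>2 / 2)))))"
      unfolding charS ex
    proof (rule norm_prod_diff_le)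
      show "cmod (\<phi> (t * w k)) \<le> 1" for k unfolding \<phi>_def by (rule \<mu>.cmod_char_le_1)
      show "cmod (complex_of_real (exp (- ((t * w k)\<^sup>2 * \<sigma>2 / 2)))) \<le> 1" for k
        using s2pos by simp
    qed
    also have "\<dots> \<le> (\<Sum>k<N. (t * w k)\<^sup>2 * C)" by (rule sum_mono) (rule bk)
    also have "\<dots> = t\<^sup>2 * (\<Sum>k<N. (w k)\<^sup>2) * C"
      by (simp add: sum_distrib_left sum_distrib_right power_mult_distrib algebra_simps)
    also have "\<dots> \<le> t\<^sup>2 * W * C"
    proof -
      have "(\<Sum>k<N. (w k)\<^sup>2) \<le> W" unfolding W_def by (rule sum_le_suminf[OF wsum]) auto
      then show ?thesis using C0 by (intro mult_right_mono mult_left_mono) auto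
    qed
    finally show ?thesis .
  qed
  have lim1: "(\<lambda>N. char (distr M borel (S N)) t) \<longlonglongrightarrow> char (distr M borel (\<lambda>\<omega>. \<Sum>k. Y k \<omega>)) t"
  proof -
    have "(\<lambda>N. CLINT \<omega>|M. iexp (t * S N \<omega>)) \<longlonglongrightarrow> (CLINT \<omega>|M. iexp (t * (\<Sum>k. Y k \<omega>)))"
    proof (rule integral_dominated_convergence[where w="\<lambda>_. 1"])
      show "AE \<omega> in M. (\<lambda>N. iexp (t * S N \<omega>)) \<longlonglongrightarrow> iexp (t * (\<Sum>k. Y k \<omega>))"
        using AEs
      proof (rule AE_mp, intro AE_I2 impI)
        fix \<omega> assume "summable (\<lambda>k. Y k \<omega>)"
        then have "(\<lambda>N. S N \<omega>) \<longlonglongrightarrow> (\<Sum>k. Y k \<omega>)" unfolding S_def by (rule summable_LIMSEQ)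
        then show "(\<lambda>N. iexp (t * S N \<omega>)) \<longlonglongrightarrow> iexp (t * (\<Sum>k. Y k \<omega>))"
          by (intro tendsto_intros)
      qed
    qed (auto simp: norm_exp_i_times)
    then show ?thesis unfolding char_def by (simp add: integral_distr)
  qed
  have lim2: "(\<lambda>N. complex_of_real (exp (- (t\<^sup>2 * \<sigma>2 * (\<Sum>k<N. (w k)\<^sup>2)) / 2)))
      \<longlonglongrightarrow> complex_of_real (exp (- (t\<^sup>2 * \<sigma>2 * W) / 2))"
    unfolding W_def by (intro tendsto_intros summable_LIMSEQ wsum) simp
  have "(\<lambda>N. cmod (char (distr M borel (S N)) t - complex_of_real (exp (- (t\<^sup>2 * \<sigma>2 * (\<Sum>k<N. (w k)\<^sup>2)) / 2))))
      \<longlonglongrightarrow> cmod (char (distr M borel (\<lambda>\<omega>. \<Sum>k. Y k \<omega>)) t - complex_of_real (exp (- (t\<^sup>2 * \<sigma>2 * W) / 2)))"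
    by (intro tendsto_intros lim1 lim2)
  then have "cmod (char (distr M borel (\<lambda>\<omega>. \<Sum>k. Y k \<omega>)) t - complex_of_real (exp (- (t\<^sup>2 * \<sigma>2 * W) / 2)))
      \<le> t\<^sup>2 * W * C"
    by (rule LIMSEQ_le_const2) (use PN in auto)
  then show ?thesis unfolding Y_def W_def C_def E_def .
qed

end

lemma lnpow_bound:
  fixes \<beta> \<delta> :: real assumes d: "0 < \<delta>"
  shows "\<exists>K>0. \<forall>x\<ge>2. ln x powr \<beta> \<le> K * x powr \<delta>"
proof (cases "\<beta> \<le> 0")
  case True
  show ?thesis
  proof (intro exI conjI allI impI)
    show "0 < ln 2 powr \<beta>" by simp
    fix x :: real assume x: "2 \<le> x"
    have "ln 2 \<le> ln x" using x by simp
    then have "ln x powr \<beta> \<le> ln 2 powr \<beta>"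
      using True by (intro powr_mono2') auto
    also have "\<dots> \<le> ln 2 powr \<beta> * x powr \<delta>"
    proof -
      have "1 \<le> x powr \<delta>" using x d by (intro ge_one_powr_ge_zero) auto
      then show ?thesis by (simp add: mult_le_cancel_left1)
    qed
    finally show "ln x powr \<beta> \<le> ln 2 powr \<beta> * x powr \<delta>" .
  qed
next
  case False
  define \<gamma> where "\<gamma> = \<delta> / \<beta>"
  have g: "0 < \<gamma>" using False d by (simp add: \<gamma>_def)
  show ?thesis
  proof (intro exI conjI allI impI)
    show "0 < (1 / \<gamma>) powr \<beta>" using g by simp
    fix x :: real assume x: "2 \<le> x"
    have "ln (x powr \<gamma>) \<le> x powr \<gamma>"
      using x by (intro order.trans[OF ln_le_minus_one]) auto
    then have l: "ln x \<le> x powr \<gamma> / \<gamma>" using x g by (simp add: ln_powr field_simps)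
    have "ln x powr \<beta> \<le> (x powr \<gamma> / \<gamma>) powr \<beta>"
      using l x False by (intro powr_mono2) auto
    also have "\<dots> = (x powr \<gamma>) powr \<beta> / \<gamma> powr \<beta>"
      using x g by (simp add: powr_divide)
    also have "(x powr \<gamma>) powr \<beta> = x powr \<delta>"
      using False by (simp add: powr_powr \<gamma>_def)
    also have "x powr \<delta> / \<gamma> powr \<beta> = (1 / \<gamma>) powr \<beta> * x powr \<delta>"
      using g by (simp add: powr_divide)
    finally show "ln x powr \<beta> \<le> (1 / \<gamma>) powr \<beta> * x powr \<delta>" .
  qed
qed

definition HH :: "real \<Rightarrow> real \<Rightarrow> real \<Rightarrow> real" where
  "HH \<beta> p u = u powr \<beta> * exp (-(1 + p) * u)"

lemma HH_mono:
  assumes x: "0 < x" "\<beta> \<le> x" and xy: "x \<le> y" and p: "0 \<le> p"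
  shows "HH \<beta> p y \<le> HH \<beta> p x"
proof -
  have y: "0 < y" using x xy by simp
  have "(y / x) powr \<beta> \<le> exp ((1 + p) * (y - x))"
  proof (cases "\<beta> \<le> 0")
    case True
    have "1 \<le> (y / x) powr (-\<beta>)"
      using True x xy by (intro ge_one_powr_ge_zero) auto
    then have i1: "1 \<le> inverse ((y / x) powr \<beta>)" by (simp add: powr_minus)
    have q: "0 < (y / x) powr \<beta>" using x y by simp
    have "(y / x) powr \<beta> * 1 \<le> (y / x) powr \<beta> * inverse ((y / x) powr \<beta>)"
      using q i1 by (intro mult_left_mono) auto
    then have "(y / x) powr \<beta> \<le> 1" using q by simp
    also have "1 \<le> exp ((1 + p) * (y - x))" using xy p by simp
    finally show ?thesis .
  next
    case False
    have "(y / x) powr \<beta> = exp (\<beta> * ln (y / x))" using x y by (simp add: powr_def)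
    also have "\<dots> \<le> exp (\<beta> * (y / x - 1))"
      using False x y by (intro exp_mono mult_left_mono ln_le_minus_one) auto
    also have "\<beta> * (y / x - 1) = (\<beta> / x) * (y - x)" using x by (simp add: field_simps)
    also have "\<dots> \<le> 1 * (y - x)"
      using x xy False by (intro mult_right_mono) (auto simp: divide_le_eq)
    also have "\<dots> \<le> (1 + p) * (y - x)" using xy p by (intro mult_right_mono) auto
    finally show ?thesis by simp
  qed
  then have "y powr \<beta> \<le> x powr \<beta> * exp ((1 + p) * (y - x))"
    using x y by (simp add: powr_divide divide_le_eq mult.commute)
  then have "y powr \<beta> * exp (-(1 + p) * y) \<le> x powr \<beta> * exp ((1 + p) * (y - x)) * exp (-(1 + p) * y)"
    by (intro mult_right_mono) auto
  also have "\<dots> = x powr \<beta> * exp (-(1 + p) * x)"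
    by (simp add: mult.assoc exp_add[symmetric] algebra_simps)
  finally show ?thesis unfolding HH_def .
qed

definition FF :: "real \<Rightarrow> real \<Rightarrow> real \<Rightarrow> real" where
  "FF \<beta> p x = ln x powr \<beta> / x powr (1 + p)"

lemma FF_HH: assumes "1 \<le> x" shows "FF \<beta> p x = HH \<beta> p (ln x)"
proof -
  have "x powr (1 + p) = exp ((1 + p) * ln x)" using assms by (simp add: powr_def)
  moreover have "inverse (exp ((1 + p) * ln x)) = exp (-(1 + p) * ln x)"
    by (simp add: exp_minus[symmetric] algebra_simps)
  ultimately show ?thesis unfolding FF_def HH_def by (simp add: divide_inverse)
qed

lemma FF_nonneg: "0 \<le> FF \<beta> p x"
  unfolding FF_def by simp

lemma HH_nonneg: "0 \<le> HH \<beta> p x"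
  unfolding HH_def by simp

lemma ln_diff_bounds:
  fixes n :: real assumes n: "0 < n"
  shows "ln (n + 1) - ln n \<le> 1 / n" "1 / (n + 1) \<le> ln (n + 1) - ln n"
proof -
  have "ln (1 + 1 / n) = ln ((n + 1) / n)" using n by (simp add: field_simps)
  also have "\<dots> = ln (n + 1) - ln n" using n by (simp add: ln_div)
  finally have "ln (n + 1) - ln n = ln (1 + 1 / n)" by simp
  also have "\<dots> \<le> 1 / n" using n by (intro ln_add_one_self_le_self) simp
  finally show "ln (n + 1) - ln n \<le> 1 / n" .
  have "ln (n / (n + 1)) \<le> n / (n + 1) - 1" using n by (intro ln_le_minus_one) simp
  also have "n / (n + 1) - 1 = - (1 / (n + 1))" using n by (simp add: field_simps)
  finally have "1 / (n + 1) \<le> - ln (n / (n + 1))" by simp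
  also have "- ln (n / (n + 1)) = ln (n + 1) - ln n" using n by (simp add: ln_div)
  finally show "1 / (n + 1) \<le> ln (n + 1) - ln n" .
qed

lemma piece_upper:
  fixes n :: real
  assumes n: "2 \<le> n" and nb: "\<beta> \<le> ln n" and p: "0 \<le> p"
  shows "(\<integral>\<^sup>+u. ennreal (u powr \<beta> * exp (-p * u)) * indicator {ln n..<ln (n+1)} u \<partial>lborel)
          \<le> ennreal (FF \<beta> p n * (n + 1) / n)"
proof -
  have lnpos: "0 < ln n" using n by simp
  define c where "c = FF \<beta> p n * (n + 1)"
  have "(\<integral>\<^sup>+u. ennreal (u powr \<beta> * exp (-p * u)) * indicator {ln n..<ln (n+1)} u \<partial>lborel)
      \<le> (\<integral>\<^sup>+u. ennreal c * indicator {ln n..<ln (n+1)} u \<partial>lborel)"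
  proof (rule nn_integral_mono)
    fix u :: real
    show "ennreal (u powr \<beta> * exp (-p * u)) * indicator {ln n..<ln (n+1)} u
        \<le> ennreal c * indicator {ln n..<ln (n+1)} u"
    proof (cases "u \<in> {ln n..<ln (n+1)}")
      case True
      then have u: "ln n \<le> u" "u < ln (n + 1)" by auto
      have "u powr \<beta> * exp (-p * u) = HH \<beta> p u * exp u"
        unfolding HH_def by (simp add: mult.assoc exp_add[symmetric] algebra_simps)
      also have "\<dots> \<le> HH \<beta> p (ln n) * (n + 1)"
      proof (intro mult_mono)
        show "HH \<beta> p u \<le> HH \<beta> p (ln n)" using lnpos nb u p by (intro HH_mono) auto
        have "exp u \<le> exp (ln (n + 1))" using u by simp
        then show "exp u \<le> n + 1" using n by simp
      qed (auto simp: HH_nonneg)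
      also have "\<dots> = c" unfolding c_def using n by (simp add: FF_HH)
      finally show ?thesis using True by (auto intro!: ennreal_leI)
    qed simp
  qed
  also have "\<dots> = ennreal c * ennreal (ln (n + 1) - ln n)"
    using n by (simp add: nn_integral_cmult_indicator)
  also have "\<dots> = ennreal (c * (ln (n + 1) - ln n))"
    using n unfolding c_def by (simp add: ennreal_mult FF_nonneg)
  also have "\<dots> \<le> ennreal (FF \<beta> p n * (n + 1) / n)"
  proof (rule ennreal_leI)
    have "c * (ln (n + 1) - ln n) \<le> c * (1 / n)"
      using ln_diff_bounds(1)[of n] n unfolding c_def by (intro mult_left_mono) (auto simp: FF_nonneg)
    then show "c * (ln (n + 1) - ln n) \<le> FF \<beta> p n * (n + 1) / n" unfolding c_def by simp
  qed
  finally show ?thesis .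
qed

lemma piece_lower:
  fixes n :: real
  assumes n: "2 \<le> n" and nb: "\<beta> \<le> ln n" and p: "0 \<le> p"
  shows "ennreal (FF \<beta> p (n + 1) * n / (n + 1))
       \<le> (\<integral>\<^sup>+u. ennreal (u powr \<beta> * exp (-p * u)) * indicator {ln n..<ln (n+1)} u \<partial>lborel)"
proof -
  have lnpos: "0 < ln n" using n by simp
  define c where "c = FF \<beta> p (n + 1) * n"
  have "ennreal (FF \<beta> p (n + 1) * n / (n + 1)) \<le> ennreal (c * (ln (n + 1) - ln n))"
  proof (rule ennreal_leI)
    have "c * (1 / (n + 1)) \<le> c * (ln (n + 1) - ln n)"
      using ln_diff_bounds(2)[of n] n unfolding c_def by (intro mult_left_mono) (auto simp: FF_nonneg)
    then show "FF \<beta> p (n + 1) * n / (n + 1) \<le> c * (ln (n + 1) - ln n)" unfolding c_def by simp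
  qed
  also have "\<dots> = ennreal c * ennreal (ln (n + 1) - ln n)"
    using n unfolding c_def by (simp add: ennreal_mult FF_nonneg)
  also have "\<dots> = (\<integral>\<^sup>+u. ennreal c * indicator {ln n..<ln (n+1)} u \<partial>lborel)"
    using n by (simp add: nn_integral_cmult_indicator)
  also have "\<dots> \<le> (\<integral>\<^sup>+u. ennreal (u powr \<beta> * exp (-p * u)) * indicator {ln n..<ln (n+1)} u \<partial>lborel)"
  proof (rule nn_integral_mono)
    fix u :: real
    show "ennreal c * indicator {ln n..<ln (n+1)} u
        \<le> ennreal (u powr \<beta> * exp (-p * u)) * indicator {ln n..<ln (n+1)} u"
    proof (cases "u \<in> {ln n..<ln (n+1)}")
      case True
      then have u: "ln n \<le> u" "u < ln (n + 1)" by auto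
      have "c = HH \<beta> p (ln (n + 1)) * n" unfolding c_def using n by (simp add: FF_HH)
      also have "\<dots> \<le> HH \<beta> p u * exp u"
      proof (intro mult_mono)
        show "HH \<beta> p (ln (n + 1)) \<le> HH \<beta> p u" using lnpos nb u p by (intro HH_mono) auto
        have "exp (ln n) \<le> exp u" using u by simp
        then show "n \<le> exp u" using n by simp
      qed (use n in \<open>auto simp: HH_nonneg\<close>)
      also have "HH \<beta> p u * exp u = u powr \<beta> * exp (-p * u)"
        unfolding HH_def by (simp add: mult.assoc exp_add[symmetric] algebra_simps)
      finally show ?thesis using True by (simp add: ennreal_leI)
    qed simp
  qed
  finally show ?thesis .
qed

lemma ln_pieces:
  fixes N0 :: nat assumes N0: "1 \<le> N0"
  defines "A \<equiv> \<lambda>k::nat. {ln (real (k + N0))..<ln (real (k + N0) + 1)}"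
  shows "disjoint_family A" "(\<Union>k. A k) = {ln (real N0)..}"
proof -
  show "disjoint_family A"
  proof (unfold disjoint_family_on_def, intro ballI impI)
    fix k l :: nat assume "k \<noteq> l"
    then consider "k < l" | "l < k" by linarith
    then show "A k \<inter> A l = {}"
    proof cases
      case 1
      then have "ln (real (k + N0) + 1) \<le> ln (real (l + N0))" using N0 by simp
      then show ?thesis unfolding A_def by auto
    next
      case 2
      then have "ln (real (l + N0) + 1) \<le> ln (real (k + N0))" using N0 by simp
      then show ?thesis unfolding A_def by auto
    qed
  qed
  show "(\<Union>k. A k) = {ln (real N0)..}"
  proof (intro equalityI subsetI)
    fix u assume "u \<in> (\<Union>k. A k)"
    then obtain k where "ln (real (k + N0)) \<le> u" unfolding A_def by auto
    moreover have "ln (real N0) \<le> ln (real (k + N0))" using N0 by simp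
    ultimately show "u \<in> {ln (real N0)..}" by simp
  next
    fix u assume u: "u \<in> {ln (real N0)..}"
    define m where "m = nat \<lfloor>exp u\<rfloor>"
    have "exp (ln (real N0)) \<le> exp u" using u by simp
    then have eN: "real N0 \<le> exp u" using N0 by simp
    have fl0: "0 \<le> \<lfloor>exp u\<rfloor>" by simp
    have rm: "real m = of_int \<lfloor>exp u\<rfloor>" using fl0 unfolding m_def by simp
    have m1: "real m \<le> exp u" using rm by simp
    have m2: "exp u < real m + 1" using rm real_of_int_floor_add_one_gt[of "exp u"] by linarith
    have mN: "N0 \<le> m"
    proof -
      have "int N0 \<le> \<lfloor>exp u\<rfloor>" using eN by (simp add: le_floor_iff)
      then show ?thesis unfolding m_def by linarith
    qed
    have mpos: "0 < real m" using mN N0 by simp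
    have "ln (real m) \<le> ln (exp u)" using m1 mpos by (subst ln_le_cancel_iff) auto
    then have "ln (real m) \<le> u" by simp
    moreover have "ln (exp u) < ln (real m + 1)" using m2 mpos by (subst ln_less_cancel_iff) auto
    then have "u < ln (real m + 1)" by simp
    ultimately have "u \<in> A (m - N0)" unfolding A_def using mN by auto
    then show "u \<in> (\<Union>k. A k)" by blast
  qed
qed

lemma integral_split_bounds:
  fixes N0 :: nat
  assumes N0: "2 \<le> N0" and nb: "\<beta> \<le> ln (real N0)" and p: "0 \<le> p"
  defines "X \<equiv> (\<integral>\<^sup>+u. ennreal (u powr \<beta> * exp (-p * u)) * indicator {ln (real N0)..} u \<partial>lborel)"
  shows "(\<Sum>k. ennreal (FF \<beta> p (real (k + N0) + 1) * real (k + N0) / (real (k + N0) + 1))) \<le> X"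
    and "X \<le> (\<Sum>k. ennreal (FF \<beta> p (real (k + N0)) * (real (k + N0) + 1) / real (k + N0)))"
proof -
  define A where "A = (\<lambda>k::nat. {ln (real (k + N0))..<ln (real (k + N0) + 1)})"
  have disj: "disjoint_family A" and U: "(\<Union>k. A k) = {ln (real N0)..}"
    using ln_pieces[of N0] N0 unfolding A_def by auto
  define g where "g u = ennreal (u powr \<beta> * exp (-p * u))" for u :: real
  have gm[measurable]: "g \<in> borel_measurable borel" unfolding g_def by measurable
  have "X = (\<integral>\<^sup>+u. (\<Sum>k. g u * indicator (A k) u) \<partial>lborel)"
    unfolding X_def
  proof (intro nn_integral_cong)
    fix u :: real
    have "(\<Sum>k. g u * indicator (A k) u) = g u * (\<Sum>k. indicator (A k) u)" by simp
    also have "(\<Sum>k. indicator (A k) u :: ennreal) = indicator (\<Union>k. A k) u"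
      by (rule suminf_indicator[OF disj])
    finally show "ennreal (u powr \<beta> * exp (-p * u)) * indicator {ln (real N0)..} u = (\<Sum>k. g u * indicator (A k) u)"
      unfolding U g_def by simp
  qed
  also have "\<dots> = (\<Sum>k. \<integral>\<^sup>+u. g u * indicator (A k) u \<partial>lborel)"
    by (rule nn_integral_suminf) (simp add: A_def)
  finally have Xeq: "X = (\<Sum>k. \<integral>\<^sup>+u. g u * indicator (A k) u \<partial>lborel)" .
  have nb': "\<beta> \<le> ln (real (k + N0))" for k
  proof -
    have "ln (real N0) \<le> ln (real (k + N0))" using N0 by simp
    then show ?thesis using nb by linarith
  qed
  have "(\<Sum>k. ennreal (FF \<beta> p (real (k + N0) + 1) * real (k + N0) / (real (k + N0) + 1)))
      \<le> (\<Sum>k. \<integral>\<^sup>+u. g u * indicator (A k) u \<partial>lborel)"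
  proof (rule suminf_le)
    fix k show "ennreal (FF \<beta> p (real (k + N0) + 1) * real (k + N0) / (real (k + N0) + 1))
        \<le> (\<integral>\<^sup>+u. g u * indicator (A k) u \<partial>lborel)"
      unfolding g_def A_def by (rule piece_lower[OF _ nb' p]) (use N0 in simp)
  qed auto
  then show "(\<Sum>k. ennreal (FF \<beta> p (real (k + N0) + 1) * real (k + N0) / (real (k + N0) + 1))) \<le> X"
    unfolding Xeq .
  have "(\<Sum>k. \<integral>\<^sup>+u. g u * indicator (A k) u \<partial>lborel)
      \<le> (\<Sum>k. ennreal (FF \<beta> p (real (k + N0)) * (real (k + N0) + 1) / real (k + N0)))"
  proof (rule suminf_le)
    fix k show "(\<integral>\<^sup>+u. g u * indicator (A k) u \<partial>lborel)
        \<le> ennreal (FF \<beta> p (real (k + N0)) * (real (k + N0) + 1) / real (k + N0))"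
      unfolding g_def A_def by (rule piece_upper[OF _ nb' p]) (use N0 in simp)
  qed auto
  then show "X \<le> (\<Sum>k. ennreal (FF \<beta> p (real (k + N0)) * (real (k + N0) + 1) / real (k + N0)))"
    unfolding Xeq .
qed

lemma scale_X:
  assumes p: "0 < p" and a: "0 \<le> a"
  shows "(\<integral>\<^sup>+u. ennreal (u powr \<beta> * exp (-p * u)) * indicator {a..} u \<partial>lborel)
       = ennreal (p powr (-1 - \<beta>)) * (\<integral>\<^sup>+v. ennreal (v powr \<beta> * exp (-v)) * indicator {p * a..} v \<partial>lborel)"
proof -
  define f where "f u = ennreal (u powr \<beta> * exp (-p * u)) * indicator {a..} u" for u :: real
  have fm[measurable]: "f \<in> borel_measurable borel" unfolding f_def by measurable
  have "(\<integral>\<^sup>+u. f u \<partial>lborel) = \<bar>1 / p\<bar> * (\<integral>\<^sup>+x. f (0 + (1 / p) * x) \<partial>lborel)"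
    by (rule nn_integral_real_affine[OF fm]) (use p in simp)
  also have "(\<lambda>x. f (0 + (1 / p) * x)) = (\<lambda>x. ennreal (p powr (-\<beta>)) * (ennreal (x powr \<beta> * exp (-x)) * indicator {p * a..} x))"
  proof (rule ext)
    fix x :: real
    show "f (0 + (1 / p) * x) = ennreal (p powr (-\<beta>)) * (ennreal (x powr \<beta> * exp (-x)) * indicator {p * a..} x)"
    proof (cases "p * a \<le> x")
      case True
      then have x0: "0 \<le> x" using p a by (meson mult_nonneg_nonneg order_trans less_imp_le)
      have ax: "a \<le> x / p" using True p by (simp add: le_divide_eq mult.commute)
      have "(x / p) powr \<beta> = x powr \<beta> / p powr \<beta>" using x0 p by (simp add: powr_divide)
      also have "\<dots> = p powr (-\<beta>) * x powr \<beta>" by (simp add: powr_minus divide_inverse)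
      finally have pw: "(x / p) powr \<beta> = p powr (-\<beta>) * x powr \<beta>" .
      have "exp (-p * (x / p)) = exp (-x)" using p by simp
      then show ?thesis using True ax unfolding f_def
        by (simp add: pw ennreal_mult[symmetric] mult.assoc)
    next
      case False
      then have "\<not> a \<le> x / p" using p by (simp add: le_divide_eq mult.commute)
      then show ?thesis using False unfolding f_def by simp
    qed
  qed
  also have "(\<integral>\<^sup>+x. ennreal (p powr (-\<beta>)) * (ennreal (x powr \<beta> * exp (-x)) * indicator {p * a..} x) \<partial>lborel)
      = ennreal (p powr (-\<beta>)) * (\<integral>\<^sup>+v. ennreal (v powr \<beta> * exp (-v)) * indicator {p * a..} v \<partial>lborel)"
    by (rule nn_integral_cmult) measurable
  also have "ennreal \<bar>1 / p\<bar> * (ennreal (p powr (-\<beta>)) * (\<integral>\<^sup>+v. ennreal (v powr \<beta> * exp (-v)) * indicator {p * a..} v \<partial>lborel))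
      = ennreal (p powr (-1 - \<beta>)) * (\<integral>\<^sup>+v. ennreal (v powr \<beta> * exp (-v)) * indicator {p * a..} v \<partial>lborel)"
  proof -
    have "ennreal \<bar>1 / p\<bar> * ennreal (p powr (-\<beta>)) = ennreal (p powr (-1 - \<beta>))"
    proof -
      have "\<bar>1 / p\<bar> * p powr (-\<beta>) = p powr (-1) * p powr (-\<beta>)" using p by (simp add: powr_minus field_simps)
      also have "\<dots> = p powr (-1 - \<beta>)" using powr_add[of p "-1" "-\<beta>"] by simp
      finally show ?thesis by (simp add: ennreal_mult[symmetric])
    qed
    then show ?thesis by (simp add: mult.assoc[symmetric])
  qed
  finally show ?thesis unfolding f_def .
qed

lemma gamma_J_bounds:
  assumes b: "-1 < \<beta>" and c: "0 \<le> c"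
  shows "(\<integral>\<^sup>+v. ennreal (v powr \<beta> * exp (-v)) * indicator {c..} v \<partial>lborel) \<le> ennreal (Gamma (1 + \<beta>))"
    and "ennreal (Gamma (1 + \<beta>)) \<le> (\<integral>\<^sup>+v. ennreal (v powr \<beta> * exp (-v)) * indicator {c..} v \<partial>lborel)
            + ennreal (c powr (1 + \<beta>) / (1 + \<beta>))"
proof -
  define g where "g v = ennreal (v powr \<beta> * exp (-v))" for v :: real
  have gm[measurable]: "g \<in> borel_measurable borel" unfolding g_def by measurable
  have G: "ennreal (Gamma (1 + \<beta>)) = (\<integral>\<^sup>+v. g v * indicator {0..} v \<partial>lborel)"
  proof -
    have "Gamma (1 + \<beta>) = nn_integral lborel (\<lambda>t. ennreal (indicator {0..} t * t powr (1 + \<beta> - 1) / exp t))"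
      by (rule Gamma_conv_nn_integral_real) (use b in simp)
    also have "\<dots> = (\<integral>\<^sup>+v. g v * indicator {0..} v \<partial>lborel)"
      by (intro nn_integral_cong) (simp add: g_def exp_minus divide_inverse split: split_indicator)
    finally show ?thesis .
  qed
  show "(\<integral>\<^sup>+v. ennreal (v powr \<beta> * exp (-v)) * indicator {c..} v \<partial>lborel) \<le> ennreal (Gamma (1 + \<beta>))"
    unfolding G g_def[symmetric]
    by (intro nn_integral_mono) (use c in \<open>auto split: split_indicator\<close>)
  have P: "(\<integral>\<^sup>+v. g v * indicator {0..<c} v \<partial>lborel) \<le> ennreal (c powr (1 + \<beta>) / (1 + \<beta>))"
  proof -
    have "(\<integral>\<^sup>+v. g v * indicator {0..<c} v \<partial>lborel) \<le> (\<integral>\<^sup>+v. ennreal (v powr \<beta>) * indicator {0..c} v \<partial>lborel)"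
    proof (intro nn_integral_mono)
      fix v :: real
      show "g v * indicator {0..<c} v \<le> ennreal (v powr \<beta>) * indicator {0..c} v"
      proof (cases "v \<in> {0..<c}")
        case True
        then have "v powr \<beta> * exp (-v) \<le> v powr \<beta>" by (intro mult_left_le) auto
        then show ?thesis using True unfolding g_def by (auto intro!: ennreal_leI)
      qed simp
    qed
    also have "\<dots> = ennreal (c powr (\<beta> + 1) / (\<beta> + 1))"
      by (rule nn_integral_has_integral_lebesgue'[OF _ has_integral_powr_from_0]) (use b c in auto)
    finally show ?thesis by (simp add: add.commute)
  qed
  have "(\<integral>\<^sup>+v. g v * indicator {0..} v \<partial>lborel) = (\<integral>\<^sup>+v. g v * indicator {0..<c} v + g v * indicator {c..} v \<partial>lborel)"
    by (intro nn_integral_cong) (use c in \<open>auto split: split_indicator\<close>)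
  also have "\<dots> = (\<integral>\<^sup>+v. g v * indicator {0..<c} v \<partial>lborel) + (\<integral>\<^sup>+v. g v * indicator {c..} v \<partial>lborel)"
    by (rule nn_integral_add) measurable
  also have "\<dots> \<le> ennreal (c powr (1 + \<beta>) / (1 + \<beta>)) + (\<integral>\<^sup>+v. g v * indicator {c..} v \<partial>lborel)"
    by (rule add_right_mono[OF P])
  finally show "ennreal (Gamma (1 + \<beta>)) \<le> (\<integral>\<^sup>+v. ennreal (v powr \<beta> * exp (-v)) * indicator {c..} v \<partial>lborel)
            + ennreal (c powr (1 + \<beta>) / (1 + \<beta>))"
    unfolding G g_def by (simp add: add.commute)
qed

lemma FF_unif_bound:
  "\<exists>K>0. \<forall>x\<ge>2. \<forall>p\<ge>0. FF \<beta> p x \<le> K * x powr (-3/4)"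
proof -
  obtain K where K: "K > 0" "\<And>x. x \<ge> 2 \<Longrightarrow> ln x powr \<beta> \<le> K * x powr (1/4)"
    using lnpow_bound[of "1/4" \<beta>] by auto
  show ?thesis
  proof (intro exI conjI allI impI)
    fix x p :: real assume x: "2 \<le> x" and p: "0 \<le> p"
    have "FF \<beta> p x = ln x powr \<beta> / x powr (1 + p)" by (simp add: FF_def)
    also have "\<dots> \<le> ln x powr \<beta> / x powr 1"
      using x p by (intro divide_left_mono powr_mono) auto
    also have "\<dots> \<le> K * x powr (1/4) / x powr 1"
      using x K by (intro divide_right_mono) auto
    also have "\<dots> = K * (x powr (1/4) / x powr 1)" by simp
    also have "x powr (1/4) / x powr 1 = x powr (1/4 - 1)" by (rule powr_diff[symmetric])
    also have "(1/4 - 1 :: real) = -3/4" by simp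
    finally show "FF \<beta> p x \<le> K * x powr (-3/4)" .
  qed (use K in auto)
qed

lemma FF_summable:
  assumes p: "0 < p" and m: "2 \<le> m"
  shows "summable (\<lambda>k. FF \<beta> p (real (k + m)))"
proof -
  obtain K where K: "K > 0" "\<And>x. x \<ge> 2 \<Longrightarrow> ln x powr \<beta> \<le> K * x powr (p/2)"
    using lnpow_bound[of "p/2" \<beta>] p by auto
  have b: "FF \<beta> p (real (k + m)) \<le> K * real (k + m) powr (-1 - p/2)" for k
  proof -
    define x where "x = real (k + m)"
    have x: "2 \<le> x" unfolding x_def using m by simp
    have "FF \<beta> p x = ln x powr \<beta> / x powr (1 + p)" by (simp add: FF_def)
    also have "\<dots> \<le> K * x powr (p/2) / x powr (1 + p)"
      using x K by (intro divide_right_mono) auto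
    also have "\<dots> = K * (x powr (p/2) / x powr (1 + p))" by simp
    also have "x powr (p/2) / x powr (1 + p) = x powr (p/2 - (1 + p))" by (rule powr_diff[symmetric])
    also have "(p/2 - (1 + p)) = -1 - p/2" by simp
    finally show ?thesis unfolding x_def .
  qed
  have "summable (\<lambda>k. K * real (k + m) powr (-1 - p/2))"
  proof -
    have "summable (\<lambda>n. real n powr (-1 - p/2))" using p by (subst summable_real_powr_iff) simp
    then have "summable (\<lambda>k. real (k + m) powr (-1 - p/2))"
      by (subst summable_iff_shift[where f="\<lambda>n. real n powr (-1 - p/2)"])
    then show ?thesis by (rule summable_mult)
  qed
  then show ?thesis
    by (rule summable_comparison_test'[where N=0]) (use b in \<open>auto simp: FF_nonneg\<close>)
qed

lemma div_le_self_real: "0 \<le> a \<Longrightarrow> 1 \<le> x \<Longrightarrow> a / x \<le> (a::real)"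
  using divide_left_mono[of 1 x a] by simp

lemma V_key:
  assumes b: "-1 < \<beta>"
  shows "\<exists>C. \<forall>p>0. \<bar>p powr (1 + \<beta>) * (\<Sum>k. FF \<beta> p (real (k + 2))) - Gamma (1 + \<beta>)\<bar> \<le> C * p powr (1 + \<beta>)"
proof -
  obtain K0 where K0: "K0 > 0" "\<And>x p. x \<ge> 2 \<Longrightarrow> p \<ge> 0 \<Longrightarrow> FF \<beta> p x \<le> K0 * x powr (-3/4)"
    using FF_unif_bound[of \<beta>] by auto
  have FK: "FF \<beta> p x \<le> K0" if "x \<ge> 2" "p \<ge> 0" for x p
  proof -
    have "x powr (-3/4) \<le> x powr 0" using that by (intro powr_mono) auto
    then have "x powr (-3/4) \<le> 1" using that by simp
    then have "K0 * x powr (-3/4) \<le> K0 * 1" using K0(1) by (intro mult_left_mono) auto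
    then show ?thesis using K0(2)[OF that] by simp
  qed
  have FK7: "FF \<beta> p x / x \<le> K0 * x powr (-7/4)" if x: "x \<ge> 2" "p \<ge> 0" for x p
  proof -
    have "FF \<beta> p x / x \<le> K0 * x powr (-3/4) / x" using K0(2)[OF x] x by (intro divide_right_mono) auto
    also have "K0 * x powr (-3/4) / x = K0 * (x powr (-3/4) / x powr 1)" using x by simp
    also have "x powr (-3/4) / x powr 1 = x powr (-3/4 - 1)" by (rule powr_diff[symmetric])
    also have "(-3/4 - 1 :: real) = -7/4" by simp
    finally show ?thesis .
  qed
  define N0 :: nat where "N0 = nat \<lceil>exp \<bar>\<beta>\<bar>\<rceil> + 2"
  have N0: "2 \<le> N0" unfolding N0_def by simp
  have eN0: "exp \<bar>\<beta>\<bar> \<le> real N0"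
  proof -
    have c: "exp \<bar>\<beta>\<bar> \<le> real_of_int \<lceil>exp \<bar>\<beta>\<bar>\<rceil>" by (rule le_of_int_ceiling)
    have c0: "0 \<le> \<lceil>exp \<bar>\<beta>\<bar>\<rceil>" using exp_gt_zero[of "\<bar>\<beta>\<bar>"] by (simp; linarith)
    have "real N0 = real_of_int \<lceil>exp \<bar>\<beta>\<bar>\<rceil> + 2" unfolding N0_def using c0 by simp
    then show ?thesis using c by linarith
  qed
  define a where "a = ln (real N0)"
  have aa: "\<bar>\<beta>\<bar> \<le> a"
  proof -
    have "ln (exp \<bar>\<beta>\<bar>) \<le> ln (real N0)" using eN0 N0 by (subst ln_le_cancel_iff) auto
    then show ?thesis unfolding a_def by simp
  qed
  then have a0: "0 \<le> a" and nb: "\<beta> \<le> ln (real N0)" unfolding a_def by auto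
  define E0 where "E0 = (\<Sum>k. K0 * real (k + 2) powr (-7/4))"
  have sE0: "summable (\<lambda>k. K0 * real (k + 2) powr (-7/4))"
  proof -
    have "summable (\<lambda>n. real n powr (-7/4))" by (subst summable_real_powr_iff) simp
    then have "summable (\<lambda>k. real (k + 2) powr (-7/4))"
      by (subst summable_iff_shift[where f="\<lambda>n. real n powr (-7/4)"])
    then show ?thesis by (rule summable_mult)
  qed
  have E0b: "(\<Sum>k. FF \<beta> p (real (k + m)) / real (k + m)) \<le> E0" if "2 \<le> m" "0 \<le> p" "0 < p" for m p
  proof -
    have sm: "summable (\<lambda>k. FF \<beta> p (real (k + m)))" by (rule FF_summable) (use that in auto)
    have "summable (\<lambda>k. FF \<beta> p (real (k + m)) / real (k + m))"
      by (rule summable_comparison_test'[OF sm, where N=0]) (use that in \<open>auto simp: FF_nonneg intro!: div_le_self_real\<close>)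
    moreover have "FF \<beta> p (real (k + m)) / real (k + m) \<le> K0 * real (k + 2) powr (-7/4)" for k
    proof -
      have "FF \<beta> p (real (k + m)) / real (k + m) \<le> K0 * real (k + m) powr (-7/4)"
        by (rule FK7) (use that in auto)
      also have "\<dots> \<le> K0 * real (k + 2) powr (-7/4)"
        using that K0 by (intro mult_left_mono powr_mono2') auto
      finally show ?thesis .
    qed
    ultimately show ?thesis unfolding E0_def by (intro suminf_le sE0) auto
  qed
  define C where "C = (real N0 * K0 + K0 + E0) + a powr (1 + \<beta>) / (1 + \<beta>)"
  show ?thesis
  proof (intro exI allI impI)
    fix p :: real assume p: "0 < p"
    define T where "T = (\<Sum>k. FF \<beta> p (real (k + N0)))"
    have sT: "summable (\<lambda>k. FF \<beta> p (real (k + N0)))" by (rule FF_summable[OF p N0])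
    define F0 where "F0 = (\<Sum>i<N0 - 2. FF \<beta> p (real (i + 2)))"
    have s2: "summable (\<lambda>k. FF \<beta> p (real (k + 2)))" by (rule FF_summable[OF p]) simp
    have Vsplit: "(\<Sum>k. FF \<beta> p (real (k + 2))) = T + F0"
    proof -
      have "(\<Sum>k. FF \<beta> p (real (k + 2))) = (\<Sum>n. FF \<beta> p (real (n + (N0 - 2) + 2))) + F0"
        unfolding F0_def by (rule suminf_split_initial_segment[OF s2])
      also have "(\<lambda>n. FF \<beta> p (real (n + (N0 - 2) + 2))) = (\<lambda>n. FF \<beta> p (real (n + N0)))"
        using N0 by (simp add: algebra_simps)
      finally show ?thesis unfolding T_def .
    qed
    have F0b: "0 \<le> F0" "F0 \<le> real N0 * K0"
    proof -
      show "0 \<le> F0" unfolding F0_def by (intro sum_nonneg) (simp add: FF_nonneg)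
      have "F0 \<le> (\<Sum>i<N0 - 2. K0)" unfolding F0_def
        by (intro sum_mono FK) (use p in auto)
      also have "\<dots> = real (N0 - 2) * K0" by simp
      also have "\<dots> \<le> real N0 * K0" using K0 by (intro mult_right_mono) auto
      finally show "F0 \<le> real N0 * K0" .
    qed
    define lo where "lo k = FF \<beta> p (real (k + N0) + 1) * real (k + N0) / (real (k + N0) + 1)" for k
    define up where "up k = FF \<beta> p (real (k + N0)) * (real (k + N0) + 1) / real (k + N0)" for k
    have sT1: "summable (\<lambda>k. FF \<beta> p (real (k + N0) + 1))"
    proof -
      have "summable (\<lambda>k. FF \<beta> p (real (k + Suc N0)))" by (rule FF_summable[OF p]) (use N0 in simp)
      then show ?thesis by (simp add: add.commute)
    qed
    have sD: "summable (\<lambda>k. FF \<beta> p (real (k + N0)) / real (k + N0))"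
      by (rule summable_comparison_test'[OF sT, where N=0]) (use N0 in \<open>auto simp: FF_nonneg intro!: div_le_self_real\<close>)
    have sD1: "summable (\<lambda>k. FF \<beta> p (real (k + N0) + 1) / (real (k + N0) + 1))"
      by (rule summable_comparison_test'[OF sT1, where N=0]) (use N0 in \<open>auto simp: FF_nonneg intro!: div_le_self_real\<close>)
    have upeq: "up k = FF \<beta> p (real (k + N0)) + FF \<beta> p (real (k + N0)) / real (k + N0)" for k
      unfolding up_def using N0 by (simp add: field_simps)
    have loeq: "lo k = FF \<beta> p (real (k + N0) + 1) - FF \<beta> p (real (k + N0) + 1) / (real (k + N0) + 1)" for k
      unfolding lo_def by (simp add: field_simps)
    have sup: "summable up" unfolding upeq[abs_def] by (intro summable_add sT sD)
    have slo: "summable lo" unfolding loeq[abs_def] by (intro summable_diff sT1 sD1)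
    have up0: "0 \<le> up k" for k unfolding up_def by (simp add: FF_nonneg)
    have lo0: "0 \<le> lo k" for k unfolding lo_def by (simp add: FF_nonneg)
    have Sup: "suminf up \<le> T + E0"
    proof -
      have "suminf up = T + (\<Sum>k. FF \<beta> p (real (k + N0)) / real (k + N0))"
        unfolding upeq[abs_def] T_def by (rule suminf_add[OF sT sD, symmetric])
      also have "\<dots> \<le> T + E0" using E0b[of N0 p] N0 p by simp
      finally show ?thesis .
    qed
    have Slo: "T - K0 - E0 \<le> suminf lo"
    proof -
      have h: "(\<Sum>k. FF \<beta> p (real (k + N0) + 1)) = T - FF \<beta> p (real N0)"
      proof -
        have "(\<Sum>k. FF \<beta> p (real (Suc k + N0))) = T - FF \<beta> p (real (0 + N0))"
          unfolding T_def by (rule suminf_split_head[OF sT])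
        then show ?thesis by (simp add: add.commute add.left_commute)
      qed
      have h2: "(\<Sum>k. FF \<beta> p (real (k + N0) + 1) / (real (k + N0) + 1)) \<le> E0"
      proof -
        have "(\<Sum>k. FF \<beta> p (real (k + Suc N0)) / real (k + Suc N0)) \<le> E0"
          by (rule E0b) (use N0 p in auto)
        then show ?thesis by (simp add: add.commute add.left_commute)
      qed
      have "suminf lo = (\<Sum>k. FF \<beta> p (real (k + N0) + 1)) - (\<Sum>k. FF \<beta> p (real (k + N0) + 1) / (real (k + N0) + 1))"
        unfolding loeq[abs_def] by (rule suminf_diff[OF sT1 sD1, symmetric])
      moreover have "FF \<beta> p (real N0) \<le> K0" by (rule FK) (use N0 p in auto)
      ultimately show ?thesis using h h2 by linarith
    qed
    define P where "P = p powr (-1 - \<beta>)"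
    define J where "J = (\<integral>\<^sup>+v. ennreal (v powr \<beta> * exp (-v)) * indicator {p * a..} v \<partial>lborel)"
    have pa0: "0 \<le> p * a" using p a0 by simp
    have JG: "J \<le> ennreal (Gamma (1 + \<beta>))" unfolding J_def by (rule gamma_J_bounds(1)[OF b pa0])
    have GJ: "ennreal (Gamma (1 + \<beta>)) \<le> J + ennreal ((p * a) powr (1 + \<beta>) / (1 + \<beta>))"
      unfolding J_def by (rule gamma_J_bounds(2)[OF b pa0])
    have Jfin: "J \<noteq> \<top>" using JG by (metis ennreal_neq_top neq_top_trans)
    define j where "j = enn2real J"
    have Jj: "J = ennreal j" unfolding j_def using Jfin by (simp add: ennreal_enn2real_if)
    have j0: "0 \<le> j" unfolding j_def by simp
    have Gpos: "0 < Gamma (1 + \<beta>)" using b by (intro Gamma_real_pos) simp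
    have X: "(\<integral>\<^sup>+u. ennreal (u powr \<beta> * exp (-p * u)) * indicator {ln (real N0)..} u \<partial>lborel) = ennreal (P * j)"
      unfolding P_def using scale_X[OF p a0, of \<beta>] unfolding a_def[symmetric] J_def[symmetric] Jj
      by (simp add: ennreal_mult')
    have Pj0: "0 \<le> P * j" unfolding P_def using j0 by simp
    have i1: "suminf lo \<le> P * j"
    proof -
      have "ennreal (suminf lo) = (\<Sum>k. ennreal (lo k))" by (rule suminf_ennreal2[OF lo0 slo, symmetric])
      also have "\<dots> \<le> ennreal (P * j)"
        unfolding lo_def X[symmetric] by (rule integral_split_bounds(1)[OF N0 nb]) (use p in simp)
      finally show ?thesis using Pj0 by (simp add: ennreal_le_iff)
    qed
    have i2: "P * j \<le> suminf up"
    proof -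
      have "ennreal (P * j) \<le> (\<Sum>k. ennreal (up k))"
        unfolding up_def X[symmetric] by (rule integral_split_bounds(2)[OF N0 nb]) (use p in simp)
      also have "\<dots> = ennreal (suminf up)" by (rule suminf_ennreal2[OF up0 sup])
      finally show ?thesis using sup up0 by (simp add: ennreal_le_iff suminf_nonneg)
    qed
    have i3: "j \<le> Gamma (1 + \<beta>)" using JG Gpos unfolding Jj by (simp add: ennreal_le_iff)
    have i4: "Gamma (1 + \<beta>) \<le> j + (p * a) powr (1 + \<beta>) / (1 + \<beta>)"
    proof -
      have "0 \<le> (p * a) powr (1 + \<beta>) / (1 + \<beta>)" using b by simp
      then have "ennreal (Gamma (1 + \<beta>)) \<le> ennreal (j + (p * a) powr (1 + \<beta>) / (1 + \<beta>))"
        using GJ j0 unfolding Jj by (simp add: ennreal_plus)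
      then show ?thesis using j0 b by (subst (asm) ennreal_le_iff) auto
    qed
    define V where "V = (\<Sum>k. FF \<beta> p (real (k + 2)))"
    have VPj: "\<bar>V - P * j\<bar> \<le> real N0 * K0 + K0 + E0"
    proof -
      have "0 \<le> real N0 * K0" using K0(1) by simp
      then show ?thesis using Vsplit F0b Sup Slo i1 i2 K0(1) unfolding V_def abs_le_iff by linarith
    qed
    have pP: "p powr (1 + \<beta>) * P = 1"
      unfolding P_def using p by (simp add: powr_add[symmetric])
    have pb0: "0 \<le> p powr (1 + \<beta>)" by simp
    have "\<bar>p powr (1 + \<beta>) * V - j\<bar> = p powr (1 + \<beta>) * \<bar>V - P * j\<bar>"
    proof -
      have "p powr (1 + \<beta>) * V - j = p powr (1 + \<beta>) * (V - P * j)"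
        using pP by (simp add: algebra_simps)
      then show ?thesis by (simp add: abs_mult)
    qed
    also have "\<dots> \<le> p powr (1 + \<beta>) * (real N0 * K0 + K0 + E0)"
      by (rule mult_left_mono[OF VPj pb0])
    finally have A1: "\<bar>p powr (1 + \<beta>) * V - j\<bar> \<le> p powr (1 + \<beta>) * (real N0 * K0 + K0 + E0)" .
    have A2: "\<bar>j - Gamma (1 + \<beta>)\<bar> \<le> p powr (1 + \<beta>) * (a powr (1 + \<beta>) / (1 + \<beta>))"
    proof -
      have "(p * a) powr (1 + \<beta>) = p powr (1 + \<beta>) * a powr (1 + \<beta>)" using p a0 by (simp add: powr_mult)
      then show ?thesis using i3 i4 by (simp add: abs_le_iff)
    qed
    show "\<bar>p powr (1 + \<beta>) * (\<Sum>k. FF \<beta> p (real (k + 2))) - Gamma (1 + \<beta>)\<bar> \<le> C * p powr (1 + \<beta>)"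
      using A1 A2 unfolding V_def[symmetric] C_def by (simp add: abs_le_iff algebra_simps)
  qed
qed

theorem V_asymp:
  assumes b: "-1 < \<beta>"
  shows "((\<lambda>p. p powr (1 + \<beta>) * (\<Sum>k. FF \<beta> p (real (k + 2)))) \<longlongrightarrow> Gamma (1 + \<beta>)) (at_right 0)"
proof -
  obtain C where C: "\<And>p. p > 0 \<Longrightarrow> \<bar>p powr (1 + \<beta>) * (\<Sum>k. FF \<beta> p (real (k + 2))) - Gamma (1 + \<beta>)\<bar> \<le> C * p powr (1 + \<beta>)"
    using V_key[OF b] by blast
  have lim0: "((\<lambda>p::real. p powr (1 + \<beta>)) \<longlongrightarrow> 0) (at_right 0)"
    by (rule tendsto_zero_powrI) (use b in \<open>auto intro!: tendsto_intros eventually_at_rightI[where b=1]\<close>)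
  have "((\<lambda>p. p powr (1 + \<beta>) * (\<Sum>k. FF \<beta> p (real (k + 2))) - Gamma (1 + \<beta>)) \<longlongrightarrow> 0) (at_right 0)"
  proof (rule Lim_null_comparison)
    show "\<forall>\<^sub>F p in at_right 0. norm (p powr (1 + \<beta>) * (\<Sum>k. FF \<beta> p (real (k + 2))) - Gamma (1 + \<beta>)) \<le> C * p powr (1 + \<beta>)"
      using C by (auto intro!: eventually_at_rightI[where b=1])
    show "((\<lambda>p. C * p powr (1 + \<beta>)) \<longlongrightarrow> 0) (at_right 0)"
      using tendsto_mult[OF tendsto_const lim0, of C] by simp
  qed
  then show ?thesis by (rule LIM_zero_cancel)
qed

definition cc :: "real \<Rightarrow> real \<Rightarrow> nat \<Rightarrow> real" where
  "cc \<alpha> s k = ln (real (k + 2)) powr \<alpha> / real (k + 2) powr (1 / 2 + s)"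

definition ww :: "real \<Rightarrow> real \<Rightarrow> nat \<Rightarrow> real" where
  "ww \<alpha> s k = (if k < 2 then 0 else cc \<alpha> s (k - 2))"

lemma cc_sq: "(cc \<alpha> s k)\<^sup>2 = FF (2 * \<alpha>) (2 * s) (real (k + 2))"
proof -
  have a: "(x powr a)\<^sup>2 = x powr (2 * a)" for x a :: real
    by (simp add: power2_eq_square powr_add[symmetric])
  show ?thesis unfolding cc_def FF_def by (simp add: power_divide a algebra_simps)
qed

lemma cc_sq_bound: "\<exists>K>0. \<forall>s\<ge>0. \<forall>k. (cc \<alpha> s k)\<^sup>2 \<le> K"
proof -
  obtain K where K: "K > 0" "\<And>x p. x \<ge> 2 \<Longrightarrow> p \<ge> 0 \<Longrightarrow> FF (2 * \<alpha>) p x \<le> K * x powr (-3/4)"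
    using FF_unif_bound[of "2 * \<alpha>"] by auto
  show ?thesis
  proof (intro exI conjI allI impI)
    fix s :: real and k :: nat assume s: "0 \<le> s"
    define x where "x = real (k + 2)"
    have x: "2 \<le> x" unfolding x_def by simp
    have "x powr (-3/4) \<le> x powr 0" using x by (intro powr_mono) auto
    then have "x powr (-3/4) \<le> 1" using x by simp
    then have "K * x powr (-3/4) \<le> K * 1" using K(1) by (intro mult_left_mono) auto
    then show "(cc \<alpha> s k)\<^sup>2 \<le> K" using K(2)[OF x, of "2 * s"] s unfolding cc_sq x_def by simp
  qed (use K in auto)
qed

lemma ww_sums:
  assumes s: "0 < s"
  shows "summable (\<lambda>k. (ww \<alpha> s k)\<^sup>2)"
    and "(\<Sum>k. (ww \<alpha> s k)\<^sup>2) = (\<Sum>k. FF (2 * \<alpha>) (2 * s) (real (k + 2)))"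
proof -
  have sc: "summable (\<lambda>k. FF (2 * \<alpha>) (2 * s) (real (k + 2)))"
    by (rule FF_summable) (use s in auto)
  have sh: "(\<lambda>k. (ww \<alpha> s (k + 2))\<^sup>2) = (\<lambda>k. FF (2 * \<alpha>) (2 * s) (real (k + 2)))"
    by (simp add: ww_def cc_sq)
  show sw: "summable (\<lambda>k. (ww \<alpha> s k)\<^sup>2)"
    using sc unfolding sh[symmetric] by (subst (asm) summable_iff_shift)
  have "(\<Sum>k. (ww \<alpha> s k)\<^sup>2) = (\<Sum>k. (ww \<alpha> s (k + 2))\<^sup>2) + (\<Sum>i<2. (ww \<alpha> s i)\<^sup>2)"
    by (rule suminf_split_initial_segment[OF sw])
  also have "(\<Sum>i<2. (ww \<alpha> s i)\<^sup>2) = 0" by (simp add: ww_def eval_nat_numeral)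
  finally show "(\<Sum>k. (ww \<alpha> s k)\<^sup>2) = (\<Sum>k. FF (2 * \<alpha>) (2 * s) (real (k + 2)))"
    unfolding sh by simp
qed

lemma Edelta_tendsto:
  fixes \<mu> :: "real measure" and \<delta> :: "'b \<Rightarrow> real"
  assumes i2: "integrable \<mu> (\<lambda>x. x\<^sup>2)" and sb[measurable_cong]: "sets \<mu> = sets borel"
    and d: "(\<delta> \<longlongrightarrow> 0) F" "eventually (\<lambda>s. 0 \<le> \<delta> s) F"
  shows "((\<lambda>s. LINT x|\<mu>. min (6 * x\<^sup>2) (\<delta> s * \<bar>x\<bar> ^ 3)) \<longlongrightarrow> 0) F"
proof -
  define E where "E d = (LINT x|\<mu>. min (6 * x\<^sup>2) (d * \<bar>x\<bar> ^ 3))" for d :: real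
  have intE: "integrable \<mu> (\<lambda>x. min (6 * x\<^sup>2) (d * \<bar>x\<bar> ^ 3))" if "0 \<le> d" for d
    by (rule Bochner_Integration.integrable_bound[where f="\<lambda>x. 6 * x\<^sup>2"]) (use i2 that in auto)
  have E0: "0 \<le> E d" if "0 \<le> d" for d
    unfolding E_def by (rule integral_nonneg_AE) (use that in auto)
  have Emono: "E d \<le> E d'" if "0 \<le> d" "d \<le> d'" for d d'
    unfolding E_def
  proof (rule integral_mono)
    show "integrable \<mu> (\<lambda>x. min (6 * x\<^sup>2) (d * \<bar>x\<bar> ^ 3))" by (rule intE) fact
    show "integrable \<mu> (\<lambda>x. min (6 * x\<^sup>2) (d' * \<bar>x\<bar> ^ 3))" by (rule intE) (use that in linarith)
    fix x :: real
    have "d * \<bar>x\<bar> ^ 3 \<le> d' * \<bar>x\<bar> ^ 3" using that by (intro mult_right_mono) auto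
    then show "min (6 * x\<^sup>2) (d * \<bar>x\<bar> ^ 3) \<le> min (6 * x\<^sup>2) (d' * \<bar>x\<bar> ^ 3)" by simp
  qed
  have seq: "(\<lambda>n. E (inverse (real (Suc n)))) \<longlonglongrightarrow> 0"
  proof -
    have "(\<lambda>n. LINT x|\<mu>. min (6 * x\<^sup>2) (inverse (real (Suc n)) * \<bar>x\<bar> ^ 3)) \<longlonglongrightarrow> (LINT x|\<mu>. 0)"
    proof (rule integral_dominated_convergence[where w="\<lambda>x. 6 * x\<^sup>2"])
      show "AE x in \<mu>. (\<lambda>n. min (6 * x\<^sup>2) (inverse (real (Suc n)) * \<bar>x\<bar> ^ 3)) \<longlonglongrightarrow> 0"
      proof (rule AE_I2)
        fix x :: real
        have "(\<lambda>n. min (6 * x\<^sup>2) (inverse (real (Suc n)) * \<bar>x\<bar> ^ 3)) \<longlonglongrightarrow> min (6 * x\<^sup>2) (0 * \<bar>x\<bar> ^ 3)"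
          by (intro tendsto_intros LIMSEQ_inverse_real_of_nat)
        then show "(\<lambda>n. min (6 * x\<^sup>2) (inverse (real (Suc n)) * \<bar>x\<bar> ^ 3)) \<longlonglongrightarrow> 0" by simp
      qed
    qed (use i2 in auto)
    then show ?thesis unfolding E_def by simp
  qed
  show ?thesis
  proof (rule order_tendstoI)
    fix a :: real assume a: "a < 0"
    show "\<forall>\<^sub>F s in F. a < (LINT x|\<mu>. min (6 * x\<^sup>2) (\<delta> s * \<bar>x\<bar> ^ 3))"
      using d(2)
    proof eventually_elim
      case (elim s)
      then have "0 \<le> E (\<delta> s)" by (rule E0)
      then show ?case using a unfolding E_def by simp
    qed
  next
    fix a :: real assume a: "0 < a"
    obtain n where n: "E (inverse (real (Suc n))) < a"
      using order_tendstoD(2)[OF seq a] by (auto simp: eventually_sequentially)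
    have "\<forall>\<^sub>F s in F. \<delta> s < inverse (real (Suc n))"
      by (rule order_tendstoD(2)[OF d(1)]) simp
    with d(2) show "\<forall>\<^sub>F s in F. (LINT x|\<mu>. min (6 * x\<^sup>2) (\<delta> s * \<bar>x\<bar> ^ 3)) < a"
    proof eventually_elim
      case (elim s)
      then have "E (\<delta> s) \<le> E (inverse (real (Suc n)))" by (intro Emono) auto
      then show ?case using n unfolding E_def by simp
    qed
  qed
qed

context prob_space begin

lemma per_s_bound:
  fixes \<eta> :: "nat \<Rightarrow> 'a \<Rightarrow> real" and \<alpha> :: real
  assumes meas: "\<And>k. \<eta> k \<in> borel_measurable M"
    and indep: "indep_vars (\<lambda>_. borel) \<eta> UNIV"
    and ident: "\<And>k. distr M borel (\<eta> k) = distr M borel (\<eta> 0)"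
    and int1: "integrable M (\<eta> 0)"
    and int2: "integrable M (\<lambda>\<omega>. (\<eta> 0 \<omega>)\<^sup>2)"
    and mean0: "integral\<^sup>L M (\<eta> 0) = 0"
    and var_pos: "integral\<^sup>L M (\<lambda>\<omega>. (\<eta> 0 \<omega>)\<^sup>2) > 0"
    and alpha: "\<alpha> > - 1 / 2"
    and s: "0 < s"
    and K: "\<And>s k. 0 \<le> s \<Longrightarrow> (cc \<alpha> s k)\<^sup>2 \<le> K" and K0: "0 < K"
  defines "\<sigma>2 \<equiv> integral\<^sup>L M (\<lambda>\<omega>. (\<eta> 0 \<omega>)\<^sup>2)"
    and "\<mu> \<equiv> distr M borel (\<eta> 0)"
    and "L \<equiv> sqrt ((2 * s) powr (1 + 2 * \<alpha>) / (Gamma (1 + 2 * \<alpha>) * integral\<^sup>L M (\<lambda>\<omega>. (\<eta> 0 \<omega>)\<^sup>2)))"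
    and "\<rho> \<equiv> (2 * s) powr (1 + 2 * \<alpha>) * (\<Sum>k. FF (2 * \<alpha>) (2 * s) (real (k + 2))) / Gamma (1 + 2 * \<alpha>)"
  shows "cmod (char (distr M borel (\<lambda>\<omega>. L * (\<Sum>k. cc \<alpha> s k * \<eta> (k + 2) \<omega>))) t
             - complex_of_real (exp (- (t\<^sup>2) / 2)))
     \<le> \<bar>exp (- (t\<^sup>2 * \<rho>) / 2) - exp (- (t\<^sup>2) / 2)\<bar>
       + (t\<^sup>2 * \<rho> / \<sigma>2) * ((LINT x|\<mu>. min (6 * x\<^sup>2) ((\<bar>t\<bar> * L * sqrt K) * \<bar>x\<bar> ^ 3)) / 6
                          + (\<bar>t\<bar> * L * sqrt K)\<^sup>2 * \<sigma>2\<^sup>2 / 8)"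
proof -
  note [measurable] = meas
  have s2: "0 < \<sigma>2" unfolding \<sigma>2_def by (rule var_pos)
  have Gp: "0 < Gamma (1 + 2 * \<alpha>)" using alpha by (intro Gamma_real_pos) simp
  have L0: "0 \<le> L" unfolding L_def \<sigma>2_def[symmetric] using s2 Gp by simp
  have L2: "L\<^sup>2 = (2 * s) powr (1 + 2 * \<alpha>) / (Gamma (1 + 2 * \<alpha>) * \<sigma>2)"
    unfolding L_def \<sigma>2_def[symmetric] using s2 Gp by (simp add: real_sqrt_pow2 less_imp_le)
  have distrX: "distr M borel (\<eta> k) = \<mu>" for k unfolding \<mu>_def by (rule ident)
  have mu_i1: "integrable \<mu> (\<lambda>x. x)" unfolding \<mu>_def using int1 by (subst integrable_distr_eq) auto
  have mu_i2: "integrable \<mu> (\<lambda>x. x\<^sup>2)" unfolding \<mu>_def using int2 by (subst integrable_distr_eq) auto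
  have mu_m0: "(LINT x|\<mu>. x) = 0" unfolding \<mu>_def using mean0 by (subst integral_distr) auto
  have mu_s2: "(LINT x|\<mu>. x\<^sup>2) = \<sigma>2" unfolding \<mu>_def \<sigma>2_def by (subst integral_distr) auto
  define w where "w = ww \<alpha> s"
  have wsum: "summable (\<lambda>k. (w k)\<^sup>2)" unfolding w_def by (rule ww_sums(1)[OF s])
  have wV: "(\<Sum>k. (w k)\<^sup>2) = (\<Sum>k. FF (2 * \<alpha>) (2 * s) (real (k + 2)))"
    unfolding w_def by (rule ww_sums(2)[OF s])
  have int2k: "integrable M (\<lambda>\<omega>. (\<eta> k \<omega>)\<^sup>2)" for k
    using mu_i2 unfolding distrX[of k, symmetric] by (subst (asm) integrable_distr_eq) auto
  have meank: "expectation (\<eta> k) = 0" for k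
    using mu_m0 unfolding distrX[of k, symmetric] by (subst (asm) integral_distr) auto
  have vark: "expectation (\<lambda>\<omega>. (\<eta> k \<omega>)\<^sup>2) = \<sigma>2" for k
    using mu_s2 unfolding distrX[of k, symmetric] by (subst (asm) integral_distr) auto
  define Y where "Y k \<omega> = w k * \<eta> k \<omega>" for k \<omega>
  have indepY: "indep_vars (\<lambda>_. borel) Y UNIV"
    unfolding Y_def by (rule indep_vars_compose2[OF indep, where Y="\<lambda>k x. w k * x"]) simp
  have AEs: "AE \<omega> in M. summable (\<lambda>k. w k * \<eta> k \<omega>)"
  proof -
    have "AE \<omega> in M. summable (\<lambda>k. Y k \<omega>)"
    proof (rule kolmogorov_as[OF indepY])
      show "integrable M (\<lambda>\<omega>. (Y k \<omega>)\<^sup>2)" for k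
        unfolding Y_def using int2k[of k] by (simp add: power_mult_distrib)
      show "expectation (Y k) = 0" for k unfolding Y_def using meank[of k] by simp
      have "(\<lambda>k. expectation (\<lambda>\<omega>. (Y k \<omega>)\<^sup>2)) = (\<lambda>k. (w k)\<^sup>2 * \<sigma>2)"
        unfolding Y_def using vark by (simp add: power_mult_distrib)
      then show "summable (\<lambda>k. expectation (\<lambda>\<omega>. (Y k \<omega>)\<^sup>2))" using wsum by (simp add: summable_mult2)
    qed
    then show ?thesis unfolding Y_def .
  qed
  define Z where "Z \<omega> = (\<Sum>k. w k * \<eta> k \<omega>)" for \<omega>
  have [measurable]: "Z \<in> borel_measurable M" unfolding Z_def by measurable
  have AEeq: "AE \<omega> in M. L * (\<Sum>k. cc \<alpha> s k * \<eta> (k + 2) \<omega>) = L * Z \<omega>"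
    using AEs
  proof (rule AE_mp, intro AE_I2 impI)
    fix \<omega> assume sm: "summable (\<lambda>k. w k * \<eta> k \<omega>)"
    have "Z \<omega> = (\<Sum>k. w (k + 2) * \<eta> (k + 2) \<omega>) + (\<Sum>i<2. w i * \<eta> i \<omega>)"
      unfolding Z_def by (rule suminf_split_initial_segment[OF sm])
    also have "(\<Sum>i<2. w i * \<eta> i \<omega>) = 0" by (simp add: w_def ww_def eval_nat_numeral)
    also have "(\<lambda>k. w (k + 2) * \<eta> (k + 2) \<omega>) = (\<lambda>k. cc \<alpha> s k * \<eta> (k + 2) \<omega>)"
      by (simp add: w_def ww_def)
    finally show "L * (\<Sum>k. cc \<alpha> s k * \<eta> (k + 2) \<omega>) = L * Z \<omega>" by simp
  qed
  have ch: "char (distr M borel (\<lambda>\<omega>. L * (\<Sum>k. cc \<alpha> s k * \<eta> (k + 2) \<omega>))) t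
      = char (distr M borel Z) (t * L)"
  proof -
    have "distr M borel (\<lambda>\<omega>. L * (\<Sum>k. cc \<alpha> s k * \<eta> (k + 2) \<omega>)) = distr M borel (\<lambda>\<omega>. L * Z \<omega>)"
      by (rule distr_cong_AE[OF refl refl AEeq]) measurable
    then show ?thesis by (simp add: char_scale)
  qed
  define \<delta> where "\<delta> = \<bar>t\<bar> * L * sqrt K"
  have del: "\<bar>t * L * w k\<bar> \<le> \<delta>" for k
  proof -
    have "(w k)\<^sup>2 \<le> K" unfolding w_def ww_def using K[of s] s K0 by auto
    then have "\<bar>w k\<bar> \<le> sqrt K" by (metis real_sqrt_abs real_sqrt_le_mono)
    then have "\<bar>t\<bar> * L * \<bar>w k\<bar> \<le> \<bar>t\<bar> * L * sqrt K" using L0 by (intro mult_left_mono) auto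
    then show ?thesis unfolding \<delta>_def using L0 by (simp add: abs_mult)
  qed
  have main: "cmod (char (distr M borel (\<lambda>\<omega>. \<Sum>k. w k * \<eta> k \<omega>)) (t * L)
               - complex_of_real (exp (- ((t * L)\<^sup>2 * \<sigma>2 * (\<Sum>k. (w k)\<^sup>2)) / 2)))
      \<le> (t * L)\<^sup>2 * (\<Sum>k. (w k)\<^sup>2) * ((LINT x|\<mu>. min (6 * x\<^sup>2) (\<delta> * \<bar>x\<bar> ^ 3)) / 6 + \<delta>\<^sup>2 * \<sigma>2\<^sup>2 / 8)"
    by (rule char_weighted_series[OF indep distrX mu_i1 mu_i2 mu_m0 mu_s2 wsum del])
  have e1: "(t * L)\<^sup>2 * \<sigma>2 * (\<Sum>k. (w k)\<^sup>2) = t\<^sup>2 * \<rho>"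
    unfolding wV \<rho>_def power_mult_distrib L2 using s2 Gp by (simp add: field_simps)
  have e2: "(t * L)\<^sup>2 * (\<Sum>k. (w k)\<^sup>2) = t\<^sup>2 * \<rho> / \<sigma>2"
    unfolding wV \<rho>_def power_mult_distrib L2 using s2 Gp by (simp add: field_simps)
  have "cmod (char (distr M borel (\<lambda>\<omega>. L * (\<Sum>k. cc \<alpha> s k * \<eta> (k + 2) \<omega>))) t
             - complex_of_real (exp (- (t\<^sup>2) / 2)))
      = cmod ((char (distr M borel Z) (t * L) - complex_of_real (exp (- (t\<^sup>2 * \<rho>) / 2)))
              + complex_of_real (exp (- (t\<^sup>2 * \<rho>) / 2) - exp (- (t\<^sup>2) / 2)))"
    unfolding ch by simp
  also have "\<dots> \<le> cmod (char (distr M borel Z) (t * L) - complex_of_real (exp (- (t\<^sup>2 * \<rho>) / 2)))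
              + cmod (complex_of_real (exp (- (t\<^sup>2 * \<rho>) / 2) - exp (- (t\<^sup>2) / 2)))"
    by (rule norm_triangle_ineq)
  also have "\<dots> \<le> (t\<^sup>2 * \<rho> / \<sigma>2) * ((LINT x|\<mu>. min (6 * x\<^sup>2) (\<delta> * \<bar>x\<bar> ^ 3)) / 6 + \<delta>\<^sup>2 * \<sigma>2\<^sup>2 / 8)
              + \<bar>exp (- (t\<^sup>2 * \<rho>) / 2) - exp (- (t\<^sup>2) / 2)\<bar>"
  proof (rule add_mono)
    show "cmod (char (distr M borel Z) (t * L) - complex_of_real (exp (- (t\<^sup>2 * \<rho>) / 2)))
        \<le> (t\<^sup>2 * \<rho> / \<sigma>2) * ((LINT x|\<mu>. min (6 * x\<^sup>2) (\<delta> * \<bar>x\<bar> ^ 3)) / 6 + \<delta>\<^sup>2 * \<sigma>2\<^sup>2 / 8)"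
      using main unfolding Z_def e1 e2 .
    show "cmod (complex_of_real (exp (- (t\<^sup>2 * \<rho>) / 2) - exp (- (t\<^sup>2) / 2)))
        \<le> \<bar>exp (- (t\<^sup>2 * \<rho>) / 2) - exp (- (t\<^sup>2) / 2)\<bar>"
      by (simp only: norm_of_real order_refl)
  qed
  finally show ?thesis unfolding \<delta>_def by simp
qed

end


lemma filterlim_double_at_right: "filterlim (\<lambda>s::real. 2 * s) (at_right 0) (at_right 0)"
proof -
  have "((\<lambda>s::real. 2 * s) \<longlongrightarrow> 2 * 0) (at_right 0)" by (intro tendsto_intros)
  moreover have "\<forall>\<^sub>F s in at_right (0::real). 2 * s \<in> {0<..} \<and> 2 * s \<noteq> 0"
    using eventually_at_right_less[of "0::real"] by eventually_elim auto
  ultimately show ?thesis by (simp add: filterlim_at)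
qed

theorem corollary2p4:
  fixes M :: "'a measure" and \<eta> :: "nat \<Rightarrow> 'a \<Rightarrow> real" and \<alpha> :: real
  assumes "prob_space M"
    and meas: "\<And>k. \<eta> k \<in> borel_measurable M"
    and indep: "prob_space.indep_vars M (\<lambda>_. borel) \<eta> UNIV"
    and ident: "\<And>k. distr M borel (\<eta> k) = distr M borel (\<eta> 0)"
    and int1: "integrable M (\<eta> 0)"
    and int2: "integrable M (\<lambda>\<omega>. (\<eta> 0 \<omega>)\<^sup>2)"
    and mean0: "integral\<^sup>L M (\<eta> 0) = 0"
    and var_pos: "integral\<^sup>L M (\<lambda>\<omega>. (\<eta> 0 \<omega>)\<^sup>2) > 0"
    and alpha: "\<alpha> > - 1 / 2"
  shows "weak_conv_filter
           (\<lambda>s. distr M borel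
              (\<lambda>\<omega>. sqrt ((2 * s) powr (1 + 2 * \<alpha>) /
                          (Gamma (1 + 2 * \<alpha>) * integral\<^sup>L M (\<lambda>\<omega>'. (\<eta> 0 \<omega>')\<^sup>2))) *
                    (\<Sum>k. (ln (real (k + 2))) powr \<alpha> / real (k + 2) powr (1 / 2 + s)
                           * \<eta> (k + 2) \<omega>)))
           (density lborel std_normal_density)
           (at_right 0)"
proof -
  interpret prob_space M by fact
  note [measurable] = meas
  obtain K where K0: "0 < K" and K: "\<And>s k. 0 \<le> s \<Longrightarrow> (cc \<alpha> s k)\<^sup>2 \<le> K"
    using cc_sq_bound[of \<alpha>] by auto
  define \<sigma>2 where "\<sigma>2 = integral\<^sup>L M (\<lambda>\<omega>. (\<eta> 0 \<omega>)\<^sup>2)"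
  have s2: "0 < \<sigma>2" unfolding \<sigma>2_def by (rule var_pos)
  define \<mu> where "\<mu> = distr M borel (\<eta> 0)"
  have Gp: "0 < Gamma (1 + 2 * \<alpha>)" using alpha by (intro Gamma_real_pos) simp
  define L where "L s = sqrt ((2 * s) powr (1 + 2 * \<alpha>) / (Gamma (1 + 2 * \<alpha>) * \<sigma>2))" for s :: real
  define \<rho> where "\<rho> s = (2 * s) powr (1 + 2 * \<alpha>) * (\<Sum>k. FF (2 * \<alpha>) (2 * s) (real (k + 2))) / Gamma (1 + 2 * \<alpha>)" for s :: real
  define Ms where "Ms s = distr M borel
              (\<lambda>\<omega>. sqrt ((2 * s) powr (1 + 2 * \<alpha>) /
                          (Gamma (1 + 2 * \<alpha>) * integral\<^sup>L M (\<lambda>\<omega>'. (\<eta> 0 \<omega>')\<^sup>2))) *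
                    (\<Sum>k. (ln (real (k + 2))) powr \<alpha> / real (k + 2) powr (1 / 2 + s)
                           * \<eta> (k + 2) \<omega>))" for s :: real
  have Ms_eq: "Ms s = distr M borel (\<lambda>\<omega>. L s * (\<Sum>k. cc \<alpha> s k * \<eta> (k + 2) \<omega>))" for s
    unfolding Ms_def L_def cc_def \<sigma>2_def ..
  have rdMs: "real_distribution (Ms s)" for s
    unfolding Ms_def by (rule real_distribution_distr) measurable
  have i2mu: "integrable \<mu> (\<lambda>x. x\<^sup>2)" unfolding \<mu>_def using int2 by (subst integrable_distr_eq) auto
  have CH: "((\<lambda>s. char (Ms s) t) \<longlongrightarrow> char std_normal_distribution t) (at_right 0)" for t
  proof -
    define B where "B s = \<bar>exp (- (t\<^sup>2 * \<rho> s) / 2) - exp (- (t\<^sup>2) / 2)\<bar>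
       + (t\<^sup>2 * \<rho> s / \<sigma>2) * ((LINT x|\<mu>. min (6 * x\<^sup>2) ((\<bar>t\<bar> * L s * sqrt K) * \<bar>x\<bar> ^ 3)) / 6
                          + (\<bar>t\<bar> * L s * sqrt K)\<^sup>2 * \<sigma>2\<^sup>2 / 8)" for s
    have bnd: "\<forall>\<^sub>F s in at_right 0. norm (char (Ms s) t - complex_of_real (exp (- (t\<^sup>2) / 2))) \<le> B s"
      using eventually_at_right_less[of "0::real"]
    proof eventually_elim
      case (elim s)
      show ?case unfolding Ms_eq B_def L_def \<rho>_def \<sigma>2_def \<mu>_def
        by (rule per_s_bound[OF meas indep ident int1 int2 mean0 var_pos alpha elim K K0])
    qed
    have rho: "(\<rho> \<longlongrightarrow> 1) (at_right 0)"
    proof -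
      have "((\<lambda>p. p powr (1 + 2 * \<alpha>) * (\<Sum>k. FF (2 * \<alpha>) p (real (k + 2)))) \<longlongrightarrow> Gamma (1 + 2 * \<alpha>)) (at_right 0)"
        by (rule V_asymp) (use alpha in simp)
      from filterlim_compose[OF this filterlim_double_at_right]
      have "((\<lambda>s. (2 * s) powr (1 + 2 * \<alpha>) * (\<Sum>k. FF (2 * \<alpha>) (2 * s) (real (k + 2)))) \<longlongrightarrow> Gamma (1 + 2 * \<alpha>)) (at_right 0)" .
      then have "(\<rho> \<longlongrightarrow> Gamma (1 + 2 * \<alpha>) / Gamma (1 + 2 * \<alpha>)) (at_right 0)"
        unfolding \<rho>_def by (intro tendsto_intros) (use Gp in auto)
      then show ?thesis using Gp by simp
    qed
    have Lz: "(L \<longlongrightarrow> 0) (at_right 0)"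
    proof -
      have "((\<lambda>s::real. 2 * s) \<longlongrightarrow> 0) (at_right 0)"
        using filterlim_double_at_right by (simp add: filterlim_at)
      then have "((\<lambda>s::real. (2 * s) powr (1 + 2 * \<alpha>)) \<longlongrightarrow> 0) (at_right 0)"
        by (rule tendsto_zero_powrI) (use alpha eventually_at_right_less[of "0::real"] in \<open>auto elim: eventually_mono\<close>)
      then have "(L \<longlongrightarrow> sqrt (0 / (Gamma (1 + 2 * \<alpha>) * \<sigma>2))) (at_right 0)"
        unfolding L_def by (intro tendsto_intros) (use Gp s2 in auto)
      then show ?thesis by simp
    qed
    define \<delta> where "\<delta> s = \<bar>t\<bar> * L s * sqrt K" for s
    have dz: "(\<delta> \<longlongrightarrow> 0) (at_right 0)"
      unfolding \<delta>_def using tendsto_mult[OF tendsto_const Lz, of "\<bar>t\<bar>"] tendsto_mult[OF _ tendsto_const, of _ 0 _ "sqrt K"]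
      by (metis (no_types) mult_zero_left mult_zero_right)
    have d0: "\<forall>\<^sub>F s in at_right 0. 0 \<le> \<delta> s"
      by (rule always_eventually) (use Gp s2 K0 in \<open>auto simp: \<delta>_def L_def intro!: mult_nonneg_nonneg\<close>)
    have Ez: "((\<lambda>s. LINT x|\<mu>. min (6 * x\<^sup>2) (\<delta> s * \<bar>x\<bar> ^ 3)) \<longlongrightarrow> 0) (at_right 0)"
      by (rule Edelta_tendsto[OF i2mu _ dz d0]) (simp add: \<mu>_def)
    have "(B \<longlongrightarrow> \<bar>exp (- (t\<^sup>2 * 1) / 2) - exp (- (t\<^sup>2) / 2)\<bar>
         + (t\<^sup>2 * 1 / \<sigma>2) * (0 / 6 + 0\<^sup>2 * \<sigma>2\<^sup>2 / 8)) (at_right 0)"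
      unfolding B_def \<delta>_def[symmetric] by (intro tendsto_intros rho Ez dz) (use s2 in auto)
    then have Bz: "(B \<longlongrightarrow> 0) (at_right 0)" by simp
    have "((\<lambda>s. char (Ms s) t - complex_of_real (exp (- (t\<^sup>2) / 2))) \<longlongrightarrow> 0) (at_right 0)"
      by (rule Lim_null_comparison[OF bnd Bz])
    then show ?thesis unfolding char_std_normal_distribution by (rule LIM_zero_cancel)
  qed
  show ?thesis
    unfolding weak_conv_filter_def Ms_def[symmetric]
  proof (intro allI impI)
    fix x assume cx: "isCont (cdf std_normal_distribution) x"
    show "((\<lambda>s. cdf (Ms s) x) \<longlongrightarrow> cdf std_normal_distribution x) (at_right 0)"
    proof (rule tendsto_at_right_sequentially[of 0 1])
      fix S :: "nat \<Rightarrow> real"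
      assume S0: "\<And>n. 0 < S n" and S1: "\<And>n. S n < 1" and "decseq S" and Sl: "S \<longlonglongrightarrow> 0"
      have fS: "filterlim S (at_right 0) sequentially"
      proof -
        have "\<forall>n. S n \<in> {0<..} \<and> S n \<noteq> 0" using S0 by (auto simp: less_imp_neq[symmetric])
        then show ?thesis using Sl by (auto simp: filterlim_at intro!: always_eventually)
      qed
      have "weak_conv_m (\<lambda>n. Ms (S n)) std_normal_distribution"
      proof (rule levy_continuity)
        show "real_distribution (Ms (S n))" for n by (rule rdMs)
        show "real_distribution std_normal_distribution" by (rule real_dist_normal_dist)
        show "(\<lambda>n. char (Ms (S n)) t) \<longlonglongrightarrow> char std_normal_distribution t" for t
          by (rule filterlim_compose[OF CH fS])
      qed
      then show "(\<lambda>n. cdf (Ms (S n)) x) \<longlonglongrightarrow> cdf std_normal_distribution x"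
        using cx unfolding weak_conv_m_def weak_conv_def by blast
    qed simp
  qed
qed

end
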